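(* (a) Let $\alpha,\beta>0$, $\lambda\in\mathbb{R}$, $a,b>0$ with $-b<\frac{\lambda}{2}<b$. If $X\sim\mathrm{K}(\lambda,a,b;1,\alpha)$ and $Y\sim\mathrm{K}(-\lambda,a,b;1,\beta)$ are independent and $(U,V)=\tilde H_{II}^{\alpha,\beta}(X,Y)$, then $U,V$ are independent with $U\sim\mathrm{K}(-\lambda,a,b;\alpha,1)$ and $V\sim\mathrm{K}(\lambda,a,b;\beta,1)$. (b) Let $\lambda<0$, $a,b>0$ with $-b<\frac{\lambda}{2}$. If $X\sim\mathrm{K}^{(2)}(b+\frac{\lambda}{2},-\lambda,a)$ and $Y\sim\mathrm{Ga}(-\lambda,a)$ are independent and $(U,V)=F^+_{\mathrm{K\text{-}Ga},A}(X,Y)$, then $U,V$ are independent with $U\sim\mathrm{K}^{(2)}(b-\frac{\lambda}{2},\lambda,a)$ and $V\sim\mathrm{Be}'(b+\frac{\lambda}{2},-\lambda)$.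
   Context: $\mathbb{R}_+=(0,\infty)$. For $p,q>0$, $a>0$, $-b<\frac{\lambda}{2}$: $\mathrm{K}(\lambda,a,b;p,q)$ has density on $\mathbb{R}_+$ proportional to $x^{\lambda-1}e^{-apx}(1+qx^{-1})^{-b+\frac{\lambda}{2}}$. $\mathrm{K}^{(2)}(A,B,C)$ ($A,C>0$, $B\in\mathbb{R}$) has density proportional to $x^{A-1}(1+x)^{-A-B}e^{-Cx}$. $\mathrm{Ga}(A,C)$ ($A,C>0$) has density proportional to $x^{A-1}e^{-Cx}$. $\mathrm{Be}'(A,B)$ ($A,B>0$) has density proportional to $x^{A-1}(1+x)^{-A-B}$. $\tilde H_{II}^{\alpha,\beta}(x,y)=\left(\frac{y(\beta+x+y)}{\alpha\beta+\beta x+\alpha y},\ \frac{x(\alpha+x+y)}{\alpha\beta+\beta x+\alpha y}\right)$ and $F^+_{\mathrm{K\text{-}Ga},A}(x,y)=\left(x+y,\ \frac{x(x+y+1)}{y}\right)$, maps on $\mathbb{R}_+^2$. *)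

theory Defs
  imports "HOL-Probability.Probability"
begin

text \<open>Unnormalised densities on the positive half-line (zero elsewhere).\<close>

definition K_dens :: "real \<Rightarrow> real \<Rightarrow> real \<Rightarrow> real \<Rightarrow> real \<Rightarrow> real \<Rightarrow> real" where
  "K_dens lam a b p q x =
     (if 0 < x then x powr (lam - 1) * exp (- a * p * x) * (1 + q / x) powr (- b + lam / 2) else 0)"

definition K2_dens :: "real \<Rightarrow> real \<Rightarrow> real \<Rightarrow> real \<Rightarrow> real" where
  "K2_dens A B C x =
     (if 0 < x then x powr (A - 1) * (1 + x) powr (- A - B) * exp (- C * x) else 0)"

definition Ga_dens :: "real \<Rightarrow> real \<Rightarrow> real \<Rightarrow> real" where
  "Ga_dens A C x = (if 0 < x then x powr (A - 1) * exp (- C * x) else 0)"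

definition Beta'_dens :: "real \<Rightarrow> real \<Rightarrow> real \<Rightarrow> real" where
  "Beta'_dens A B x = (if 0 < x then x powr (A - 1) * (1 + x) powr (- A - B) else 0)"

definition has_density_prop :: "'a measure \<Rightarrow> ('a \<Rightarrow> real) \<Rightarrow> (real \<Rightarrow> real) \<Rightarrow> bool" where
  "has_density_prop M X f \<longleftrightarrow> (\<exists>c>0. distributed M lborel X (\<lambda>x. ennreal (c * f x)))"

definition H_II :: "real \<Rightarrow> real \<Rightarrow> real \<Rightarrow> real \<Rightarrow> real \<times> real" where
  "H_II \<alpha> \<beta> x y =
     (y * (\<beta> + x + y) / (\<alpha> * \<beta> + \<beta> * x + \<alpha> * y),
      x * (\<alpha> + x + y) / (\<alpha> * \<beta> + \<beta> * x + \<alpha> * y))"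

definition F_KGa_A :: "real \<Rightarrow> real \<Rightarrow> real \<times> real" where
  "F_KGa_A x y = (x + y, x * (x + y + 1) / y)"

end

theory Submission
  imports Defs "HOL-Analysis.Analysis"
begin

lemma subst1:
  fixes f g g' :: "real \<Rightarrow> real" and S :: "real set"
  assumes S: "S \<in> sets lebesgue"
    and der: "\<And>z. z \<in> S \<Longrightarrow> (g has_field_derivative g' z) (at z within S)"
    and inj: "inj_on g S"
    and fm: "f \<in> borel_measurable borel" and fnn: "\<And>y. 0 \<le> f y"
    and fsupp: "\<And>y. y \<notin> g ` S \<Longrightarrow> f y = 0"
    and Fm: "(\<lambda>z. indicator S z * \<bar>g' z\<bar> * f (g z)) \<in> borel_measurable borel"
  shows "(\<integral>\<^sup>+ y. ennreal (f y) \<partial>lborel) = (\<integral>\<^sup>+ z. ennreal (indicator S z * \<bar>g' z\<bar> * f (g z)) \<partial>lborel)"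
proof -
  let ?F = "\<lambda>z. indicator S z * \<bar>g' z\<bar> * f (g z)"
  have Fnn: "\<And>z. 0 \<le> ?F z" using fnn by simp
  have key: "(\<lambda>x. \<bar>g' x\<bar> *\<^sub>R f (g x)) absolutely_integrable_on S \<and> integral S (\<lambda>x. \<bar>g' x\<bar> *\<^sub>R f (g x)) = b
          \<longleftrightarrow> f absolutely_integrable_on g ` S \<and> integral (g ` S) f = b" for b
    by (rule has_absolute_integral_change_of_variables_real[OF S der inj])
  have fres: "(\<lambda>x. if x \<in> g ` S then f x else 0) = f" using fsupp by (auto simp: fun_eq_iff)
  have Fres: "(\<lambda>x. if x \<in> S then \<bar>g' x\<bar> *\<^sub>R f (g x) else 0) = ?F" by (auto simp: fun_eq_iff indicator_def)
  have A: "(\<integral>\<^sup>+ y. ennreal (f y) \<partial>lborel) = (\<integral>\<^sup>+ z. ennreal (?F z) \<partial>lborel)"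
    if fin: "(\<integral>\<^sup>+ y. ennreal (f y) \<partial>lborel) < \<infinity>"
  proof -
    have "f integrable_on UNIV" by (rule nn_integral_integrable_on[OF fm fnn fin])
    hence "f integrable_on g ` S" using fres integrable_restrict_UNIV[of "g ` S" f] by simp
    hence ai: "f absolutely_integrable_on g ` S" using absolutely_integrable_on_iff_nonneg fnn by blast
    from key[of "integral (g ` S) f"] ai
    have ai2: "(\<lambda>x. \<bar>g' x\<bar> *\<^sub>R f (g x)) absolutely_integrable_on S"
      and i2: "integral S (\<lambda>x. \<bar>g' x\<bar> *\<^sub>R f (g x)) = integral (g ` S) f" by auto
    have "((\<lambda>x. \<bar>g' x\<bar> *\<^sub>R f (g x)) has_integral integral (g ` S) f) S"
      using ai2 i2 set_lebesgue_integral_eq_integral(1) by (metis integrable_integral)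
    hence "(?F has_integral integral (g ` S) f) UNIV"
      using Fres has_integral_restrict_UNIV[of S "\<lambda>x. \<bar>g' x\<bar> *\<^sub>R f (g x)"] by simp
    hence 1: "(\<integral>\<^sup>+ z. ennreal (?F z) \<partial>lborel) = ennreal (integral (g ` S) f)"
      using nn_integral_has_integral_lborel[OF Fm Fnn] by simp
    have "(f has_integral integral (g ` S) f) (g ` S)"
      using ai set_lebesgue_integral_eq_integral(1) by (metis integrable_integral)
    hence "(f has_integral integral (g ` S) f) UNIV"
      using fres has_integral_restrict_UNIV[of "g ` S" f] by simp
    hence 2: "(\<integral>\<^sup>+ z. ennreal (f z) \<partial>lborel) = ennreal (integral (g ` S) f)"
      using nn_integral_has_integral_lborel[OF fm fnn] by simp
    show ?thesis using 1 2 by simp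
  qed
  have B: "(\<integral>\<^sup>+ y. ennreal (f y) \<partial>lborel) = (\<integral>\<^sup>+ z. ennreal (?F z) \<partial>lborel)"
    if fin: "(\<integral>\<^sup>+ y. ennreal (?F y) \<partial>lborel) < \<infinity>"
  proof -
    have "?F integrable_on UNIV" by (rule nn_integral_integrable_on[OF Fm Fnn fin])
    hence "(\<lambda>x. \<bar>g' x\<bar> *\<^sub>R f (g x)) integrable_on S" using Fres integrable_restrict_UNIV[of S "\<lambda>x. \<bar>g' x\<bar> *\<^sub>R f (g x)"] by simp
    hence ai2: "(\<lambda>x. \<bar>g' x\<bar> *\<^sub>R f (g x)) absolutely_integrable_on S"
      using absolutely_integrable_on_iff_nonneg[of S "\<lambda>x. \<bar>g' x\<bar> *\<^sub>R f (g x)"] fnn by simp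
    from key[of "integral S (\<lambda>x. \<bar>g' x\<bar> *\<^sub>R f (g x))"] ai2
    have ai: "f absolutely_integrable_on g ` S"
      and i2: "integral S (\<lambda>x. \<bar>g' x\<bar> *\<^sub>R f (g x)) = integral (g ` S) f" by auto
    have "((\<lambda>x. \<bar>g' x\<bar> *\<^sub>R f (g x)) has_integral integral (g ` S) f) S"
      using ai2 i2 set_lebesgue_integral_eq_integral(1) by (metis integrable_integral)
    hence "(?F has_integral integral (g ` S) f) UNIV"
      using Fres has_integral_restrict_UNIV[of S "\<lambda>x. \<bar>g' x\<bar> *\<^sub>R f (g x)"] by simp
    hence 1: "(\<integral>\<^sup>+ z. ennreal (?F z) \<partial>lborel) = ennreal (integral (g ` S) f)"
      using nn_integral_has_integral_lborel[OF Fm Fnn] by simp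
    have "(f has_integral integral (g ` S) f) (g ` S)"
      using ai set_lebesgue_integral_eq_integral(1) by (metis integrable_integral)
    hence "(f has_integral integral (g ` S) f) UNIV"
      using fres has_integral_restrict_UNIV[of "g ` S" f] by simp
    hence 2: "(\<integral>\<^sup>+ z. ennreal (f z) \<partial>lborel) = ennreal (integral (g ` S) f)"
      using nn_integral_has_integral_lborel[OF fm fnn] by simp
    show ?thesis using 1 2 by simp
  qed
  show ?thesis
  proof (cases "(\<integral>\<^sup>+ y. ennreal (f y) \<partial>lborel) < \<infinity>")
    case True then show ?thesis by (rule A)
  next
    case False
    show ?thesis
    proof (cases "(\<integral>\<^sup>+ y. ennreal (?F y) \<partial>lborel) < \<infinity>")
      case True then show ?thesis by (rule B)
    next
      case False2: False
      from False False2 show ?thesis by (simp add: less_top[symmetric])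
    qed
  qed
qed

lemma fiber2:
  fixes h h' :: "real \<times> real \<Rightarrow> real" and \<phi> \<psi> \<psi>' :: "real \<Rightarrow> real \<Rightarrow> real"
    and D R :: "real \<Rightarrow> real set"
  assumes hm: "h \<in> borel_measurable (borel \<Otimes>\<^sub>M borel)" and hnn: "\<And>p. 0 \<le> h p"
    and h'm: "h' \<in> borel_measurable (borel \<Otimes>\<^sub>M borel)"
    and Tm: "(\<lambda>p. \<phi> (fst p) (snd p)) \<in> borel_measurable (borel \<Otimes>\<^sub>M borel)"
    and supp: "\<And>x y. y \<notin> D x \<Longrightarrow> h (x,y) = 0"
    and Rs: "\<And>x. R x \<in> sets lebesgue"
    and maps: "\<And>x y. y \<in> D x \<Longrightarrow> \<phi> x y \<in> R x \<and> \<psi> x (\<phi> x y) = y"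
    and maps2: "\<And>x z. z \<in> R x \<Longrightarrow> \<psi> x z \<in> D x \<and> \<phi> x (\<psi> x z) = z"
    and der: "\<And>x z. z \<in> R x \<Longrightarrow> (\<psi> x has_field_derivative \<psi>' x z) (at z within R x)"
    and h'def: "\<And>x z. h' (x,z) = (if z \<in> R x then \<bar>\<psi>' x z\<bar> * h (x, \<psi> x z) else 0)"
  shows "distr (density (lborel \<Otimes>\<^sub>M lborel) (\<lambda>p. ennreal (h p))) (lborel \<Otimes>\<^sub>M lborel) (\<lambda>p. (fst p, \<phi> (fst p) (snd p)))
       = density (lborel \<Otimes>\<^sub>M lborel) (\<lambda>p. ennreal (h' p))"
proof (rule measure_eqI)
  show "sets (distr (density (lborel \<Otimes>\<^sub>M lborel) (\<lambda>p. ennreal (h p))) (lborel \<Otimes>\<^sub>M lborel) (\<lambda>p. (fst p, \<phi> (fst p) (snd p))))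
       = sets (density (lborel \<Otimes>\<^sub>M lborel) (\<lambda>p. ennreal (h' p)))" by simp
  fix A :: "(real \<times> real) set"
  assume "A \<in> sets (distr (density (lborel \<Otimes>\<^sub>M lborel) (\<lambda>p. ennreal (h p))) (lborel \<Otimes>\<^sub>M lborel) (\<lambda>p. (fst p, \<phi> (fst p) (snd p))))"
  hence A[measurable]: "A \<in> sets (borel \<Otimes>\<^sub>M borel)" by simp
  note [measurable] = hm h'm Tm
  have Tm2[measurable]: "(\<lambda>p. (fst p, \<phi> (fst p) (snd p))) \<in> (borel \<Otimes>\<^sub>M borel) \<rightarrow>\<^sub>M (borel \<Otimes>\<^sub>M borel)" by measurable
  have Tm3: "(\<lambda>p. (fst p, \<phi> (fst p) (snd p))) \<in> (lborel \<Otimes>\<^sub>M lborel) \<rightarrow>\<^sub>M (lborel \<Otimes>\<^sub>M lborel)" by measurable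
  have "emeasure (distr (density (lborel \<Otimes>\<^sub>M lborel) (\<lambda>p. ennreal (h p))) (lborel \<Otimes>\<^sub>M lborel) (\<lambda>p. (fst p, \<phi> (fst p) (snd p)))) A
      = (\<integral>\<^sup>+ p. ennreal (h p * indicator A (fst p, \<phi> (fst p) (snd p))) \<partial>(lborel \<Otimes>\<^sub>M lborel))"
    apply (subst emeasure_distr)
      apply simp
     apply simp
    apply (subst emeasure_density)
      apply simp
     using measurable_sets[OF Tm3, of A] A apply simp
    apply (rule nn_integral_cong)
    apply (simp add: indicator_def)
    done
  also have "\<dots> = (\<integral>\<^sup>+ x. \<integral>\<^sup>+ y. ennreal (h (x,y) * indicator A (x, \<phi> x y)) \<partial>lborel \<partial>lborel)"
    by (subst lborel.nn_integral_fst[symmetric]) auto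
  also have "\<dots> = (\<integral>\<^sup>+ x. \<integral>\<^sup>+ z. ennreal (h' (x,z) * indicator A (x, z)) \<partial>lborel \<partial>lborel)"
  proof (rule nn_integral_cong)
    fix x :: real
    have img: "\<psi> x ` R x = D x"
    proof
      show "\<psi> x ` R x \<subseteq> D x" using maps2 by auto
      show "D x \<subseteq> \<psi> x ` R x"
      proof
        fix y assume "y \<in> D x"
        with maps[of y x] show "y \<in> \<psi> x ` R x" by (metis image_eqI)
      qed
    qed
    have inj: "inj_on (\<psi> x) (R x)" by (metis inj_onI maps2)
    have fm: "(\<lambda>y. h (x,y) * indicator A (x, \<phi> x y)) \<in> borel_measurable borel"
    proof -
      have "(\<lambda>p. h p * indicator A (fst p, \<phi> (fst p) (snd p))) \<in> borel_measurable (borel \<Otimes>\<^sub>M borel)" by measurable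
      from measurable_Pair2[OF this, of x] show ?thesis by simp
    qed
    have Feq: "(\<lambda>z. indicator (R x) z * \<bar>\<psi>' x z\<bar> * (h (x, \<psi> x z) * indicator A (x, \<phi> x (\<psi> x z))))
        = (\<lambda>z. h' (x,z) * indicator A (x, z))"
      using maps2 by (auto simp: fun_eq_iff h'def indicator_def)
    have Fm: "(\<lambda>z. h' (x,z) * indicator A (x, z)) \<in> borel_measurable borel"
    proof -
      have "(\<lambda>p. h' p * indicator A p) \<in> borel_measurable (borel \<Otimes>\<^sub>M borel)" by measurable
      from measurable_Pair2[OF this, of x] show ?thesis by simp
    qed
    have "(\<integral>\<^sup>+ y. ennreal (h (x,y) * indicator A (x, \<phi> x y)) \<partial>lborel)
       = (\<integral>\<^sup>+ z. ennreal (indicator (R x) z * \<bar>\<psi>' x z\<bar> * (h (x, \<psi> x z) * indicator A (x, \<phi> x (\<psi> x z)))) \<partial>lborel)"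
      apply (rule subst1[OF Rs der inj fm])
      subgoal using hnn by simp
      subgoal using hnn by simp
      subgoal using supp img by auto
      subgoal using Fm Feq by simp
      done
    also have "\<dots> = (\<integral>\<^sup>+ z. ennreal (h' (x,z) * indicator A (x, z)) \<partial>lborel)"
      using Feq[THEN fun_cong] by (simp only:)
    finally show "(\<integral>\<^sup>+ y. ennreal (h (x,y) * indicator A (x, \<phi> x y)) \<partial>lborel)
       = (\<integral>\<^sup>+ z. ennreal (h' (x,z) * indicator A (x, z)) \<partial>lborel)" .
  qed
  also have "\<dots> = (\<integral>\<^sup>+ p. ennreal (h' p * indicator A p) \<partial>(lborel \<Otimes>\<^sub>M lborel))"
    by (subst lborel.nn_integral_fst[symmetric]) auto
  also have "\<dots> = emeasure (density (lborel \<Otimes>\<^sub>M lborel) (\<lambda>p. ennreal (h' p))) A"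
    apply (subst emeasure_density)
      apply simp
     apply simp
    apply (rule nn_integral_cong)
    apply (simp add: indicator_def)
    done
  finally show "emeasure (distr (density (lborel \<Otimes>\<^sub>M lborel) (\<lambda>p. ennreal (h p))) (lborel \<Otimes>\<^sub>M lborel) (\<lambda>p. (fst p, \<phi> (fst p) (snd p)))) A
     = emeasure (density (lborel \<Otimes>\<^sub>M lborel) (\<lambda>p. ennreal (h' p))) A" .
qed


lemma swap_density:
  fixes h :: "real \<times> real \<Rightarrow> real"
  assumes hm: "h \<in> borel_measurable (borel \<Otimes>\<^sub>M borel)" and hnn: "\<And>p. 0 \<le> h p"
  shows "distr (density (lborel \<Otimes>\<^sub>M lborel) (\<lambda>p. ennreal (h p))) (lborel \<Otimes>\<^sub>M lborel) (\<lambda>p. (snd p, fst p))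
       = density (lborel \<Otimes>\<^sub>M lborel) (\<lambda>p. ennreal (h (snd p, fst p)))"
proof (rule measure_eqI)
  have Pi: "pair_sigma_finite lborel lborel"
    by unfold_locales
  show "sets (distr (density (lborel \<Otimes>\<^sub>M lborel) (\<lambda>p. ennreal (h p))) (lborel \<Otimes>\<^sub>M lborel) (\<lambda>p. (snd p, fst p)))
       = sets (density (lborel \<Otimes>\<^sub>M lborel) (\<lambda>p. ennreal (h (snd p, fst p))))" by simp
  fix A :: "(real \<times> real) set"
  assume "A \<in> sets (distr (density (lborel \<Otimes>\<^sub>M lborel) (\<lambda>p. ennreal (h p))) (lborel \<Otimes>\<^sub>M lborel) (\<lambda>p. (snd p, fst p)))"
  hence A[measurable]: "A \<in> sets (borel \<Otimes>\<^sub>M borel)" by simp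
  note [measurable] = hm
  have Tm3: "(\<lambda>p. (snd p, fst p)) \<in> (lborel \<Otimes>\<^sub>M lborel) \<rightarrow>\<^sub>M (lborel \<Otimes>\<^sub>M lborel :: (real \<times> real) measure)" by measurable
  have "emeasure (distr (density (lborel \<Otimes>\<^sub>M lborel) (\<lambda>p. ennreal (h p))) (lborel \<Otimes>\<^sub>M lborel) (\<lambda>p. (snd p, fst p))) A
      = (\<integral>\<^sup>+ p. ennreal (h p * indicator A (snd p, fst p)) \<partial>(lborel \<Otimes>\<^sub>M lborel))"
    apply (subst emeasure_distr)
      apply simp
     apply simp
    apply (subst emeasure_density)
      apply simp
     using measurable_sets[OF Tm3, of A] A apply simp
    apply (rule nn_integral_cong)
    apply (simp add: indicator_def)
    done
  also have "\<dots> = (\<integral>\<^sup>+ p. ennreal (h p * indicator A (snd p, fst p)) \<partial>(distr (lborel \<Otimes>\<^sub>M lborel) (lborel \<Otimes>\<^sub>M lborel) (\<lambda>(x, y). (y, x))))"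
    by (subst (1) pair_sigma_finite.distr_pair_swap[OF Pi]) (rule refl)
  also have "\<dots> = (\<integral>\<^sup>+ p. ennreal (h (snd p, fst p) * indicator A p) \<partial>(lborel \<Otimes>\<^sub>M lborel))"
    by (subst nn_integral_distr) (auto simp: case_prod_beta)
  also have "\<dots> = emeasure (density (lborel \<Otimes>\<^sub>M lborel) (\<lambda>p. ennreal (h (snd p, fst p)))) A"
    apply (subst emeasure_density)
      apply simp
     apply simp
    apply (rule nn_integral_cong)
    apply (simp add: indicator_def)
    done
  finally show "emeasure (distr (density (lborel \<Otimes>\<^sub>M lborel) (\<lambda>p. ennreal (h p))) (lborel \<Otimes>\<^sub>M lborel) (\<lambda>p. (snd p, fst p))) A
     = emeasure (density (lborel \<Otimes>\<^sub>M lborel) (\<lambda>p. ennreal (h (snd p, fst p)))) A" .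
qed

lemma fiber1:
  fixes h h' :: "real \<times> real \<Rightarrow> real" and \<phi> \<psi> \<psi>' :: "real \<Rightarrow> real \<Rightarrow> real"
    and D R :: "real \<Rightarrow> real set"
  assumes hm: "h \<in> borel_measurable (borel \<Otimes>\<^sub>M borel)" and hnn: "\<And>p. 0 \<le> h p"
    and h'm: "h' \<in> borel_measurable (borel \<Otimes>\<^sub>M borel)"
    and Tm: "(\<lambda>p. \<phi> (snd p) (fst p)) \<in> borel_measurable (borel \<Otimes>\<^sub>M borel)"
    and supp: "\<And>x y. x \<notin> D y \<Longrightarrow> h (x,y) = 0"
    and Rs: "\<And>y. R y \<in> sets lebesgue"
    and maps: "\<And>x y. x \<in> D y \<Longrightarrow> \<phi> y x \<in> R y \<and> \<psi> y (\<phi> y x) = x"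
    and maps2: "\<And>y z. z \<in> R y \<Longrightarrow> \<psi> y z \<in> D y \<and> \<phi> y (\<psi> y z) = z"
    and der: "\<And>y z. z \<in> R y \<Longrightarrow> (\<psi> y has_field_derivative \<psi>' y z) (at z within R y)"
    and h'def: "\<And>z y. h' (z,y) = (if z \<in> R y then \<bar>\<psi>' y z\<bar> * h (\<psi> y z, y) else 0)"
  shows "distr (density (lborel \<Otimes>\<^sub>M lborel) (\<lambda>p. ennreal (h p))) (lborel \<Otimes>\<^sub>M lborel) (\<lambda>p. (\<phi> (snd p) (fst p), snd p))
       = density (lborel \<Otimes>\<^sub>M lborel) (\<lambda>p. ennreal (h' p))"
proof -
  note [measurable] = hm h'm Tm
  let ?L = "lborel \<Otimes>\<^sub>M lborel :: (real \<times> real) measure"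
  let ?sw = "\<lambda>p::real\<times>real. (snd p, fst p)"
  let ?T2 = "\<lambda>p. (fst p, \<phi> (fst p) (snd p))"
  have swm[measurable]: "?sw \<in> ?L \<rightarrow>\<^sub>M ?L" by measurable
  have Tm': "(\<lambda>p. \<phi> (fst p) (snd p)) \<in> borel_measurable (borel \<Otimes>\<^sub>M borel)"
    using measurable_comp[OF _ Tm, of ?sw] by (simp add: comp_def)
  note [measurable] = Tm'
  have T2m: "?T2 \<in> ?L \<rightarrow>\<^sub>M ?L" by measurable
  have hs: "distr (density ?L (\<lambda>p. ennreal (h p))) ?L ?sw = density ?L (\<lambda>p. ennreal (h (snd p, fst p)))"
    by (rule swap_density[OF hm hnn])
  have f2: "distr (density ?L (\<lambda>p. ennreal (h (snd p, fst p)))) ?L ?T2 = density ?L (\<lambda>p. ennreal (h' (snd p, fst p)))"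
  proof (rule fiber2[where D=D and R=R and \<psi>=\<psi> and \<psi>'=\<psi>'])
    show "(\<lambda>p. h' (snd p, fst p)) \<in> borel_measurable (borel \<Otimes>\<^sub>M borel)" by measurable
  qed (use hnn supp Rs maps maps2 der h'def in auto)
  have s2: "distr (density ?L (\<lambda>p. ennreal (h' (snd p, fst p)))) ?L ?sw = density ?L (\<lambda>p. ennreal (h' p))"
  proof -
    have h'nn: "\<And>p. 0 \<le> h' p" using hnn by (auto simp: h'def split: prod.splits)
    have "(\<lambda>p. h' (snd p, fst p)) \<in> borel_measurable (borel \<Otimes>\<^sub>M borel)" by measurable
    from swap_density[OF this] h'nn show ?thesis by simp
  qed
  have "distr (density ?L (\<lambda>p. ennreal (h p))) ?L (\<lambda>p. (\<phi> (snd p) (fst p), snd p))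
      = distr (density ?L (\<lambda>p. ennreal (h p))) ?L (?sw \<circ> ?T2 \<circ> ?sw)"
    by (simp add: comp_def)
  also have "\<dots> = distr (distr (distr (density ?L (\<lambda>p. ennreal (h p))) ?L ?sw) ?L ?T2) ?L ?sw"
    by (subst distr_distr, simp add: swm, measurable, subst distr_distr, auto simp: T2m comp_assoc)
  also have "\<dots> = density ?L (\<lambda>p. ennreal (h' p))" using hs f2 s2 by simp
  finally show ?thesis .
qed

lemma marg_fst:
  fixes P Q :: "real \<Rightarrow> real"
  assumes [measurable]: "P \<in> borel_measurable borel" "Q \<in> borel_measurable borel"
  shows "distr (density (lborel \<Otimes>\<^sub>M lborel) (\<lambda>z. ennreal (P (fst z)) * ennreal (Q (snd z)))) lborel fst
       = density lborel (\<lambda>u. ennreal (P u) * (\<integral>\<^sup>+ v. ennreal (Q v) \<partial>lborel))"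
proof (rule measure_eqI)
  show "sets (distr (density (lborel \<Otimes>\<^sub>M lborel) (\<lambda>z. ennreal (P (fst z)) * ennreal (Q (snd z)))) lborel fst)
    = sets (density lborel (\<lambda>u. ennreal (P u) * (\<integral>\<^sup>+ v. ennreal (Q v) \<partial>lborel)))" by simp
  fix A :: "real set"
  assume "A \<in> sets (distr (density (lborel \<Otimes>\<^sub>M lborel) (\<lambda>z. ennreal (P (fst z)) * ennreal (Q (snd z)))) lborel fst)"
  hence A[measurable]: "A \<in> sets borel" by simp
  have fm: "fst \<in> (lborel \<Otimes>\<^sub>M lborel) \<rightarrow>\<^sub>M (lborel :: real measure)" by measurable
  have "emeasure (distr (density (lborel \<Otimes>\<^sub>M lborel) (\<lambda>z. ennreal (P (fst z)) * ennreal (Q (snd z)))) lborel fst) A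
     = (\<integral>\<^sup>+ z. ennreal (P (fst z)) * ennreal (Q (snd z)) * indicator A (fst z) \<partial>(lborel \<Otimes>\<^sub>M lborel))"
    apply (subst emeasure_distr)
      apply simp
     apply simp
    apply (subst emeasure_density)
      apply simp
     using measurable_sets[OF fm, of A] A apply simp
    apply (rule nn_integral_cong)
    apply (simp add: indicator_def)
    done
  also have "\<dots> = (\<integral>\<^sup>+ u. \<integral>\<^sup>+ v. ennreal (P u) * indicator A u * ennreal (Q v) \<partial>lborel \<partial>lborel)"
    by (subst lborel.nn_integral_fst[symmetric]) (auto intro!: nn_integral_cong simp: ac_simps)
  also have "\<dots> = (\<integral>\<^sup>+ u. ennreal (P u) * indicator A u * (\<integral>\<^sup>+ v. ennreal (Q v) \<partial>lborel) \<partial>lborel)"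
    by (intro nn_integral_cong) (simp add: nn_integral_cmult)
  also have "\<dots> = emeasure (density lborel (\<lambda>u. ennreal (P u) * (\<integral>\<^sup>+ v. ennreal (Q v) \<partial>lborel))) A"
    by (subst emeasure_density) (auto intro!: nn_integral_cong simp: ac_simps)
  finally show "emeasure (distr (density (lborel \<Otimes>\<^sub>M lborel) (\<lambda>z. ennreal (P (fst z)) * ennreal (Q (snd z)))) lborel fst) A
     = emeasure (density lborel (\<lambda>u. ennreal (P u) * (\<integral>\<^sup>+ v. ennreal (Q v) \<partial>lborel))) A" .
qed

lemma marg_snd:
  fixes P Q :: "real \<Rightarrow> real"
  assumes [measurable]: "P \<in> borel_measurable borel" "Q \<in> borel_measurable borel"
  shows "distr (density (lborel \<Otimes>\<^sub>M lborel) (\<lambda>z. ennreal (P (fst z)) * ennreal (Q (snd z)))) lborel snd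
       = density lborel (\<lambda>v. (\<integral>\<^sup>+ u. ennreal (P u) \<partial>lborel) * ennreal (Q v))"
proof (rule measure_eqI)
  show "sets (distr (density (lborel \<Otimes>\<^sub>M lborel) (\<lambda>z. ennreal (P (fst z)) * ennreal (Q (snd z)))) lborel snd)
    = sets (density lborel (\<lambda>v. (\<integral>\<^sup>+ u. ennreal (P u) \<partial>lborel) * ennreal (Q v)))" by simp
  fix A :: "real set"
  assume "A \<in> sets (distr (density (lborel \<Otimes>\<^sub>M lborel) (\<lambda>z. ennreal (P (fst z)) * ennreal (Q (snd z)))) lborel snd)"
  hence A[measurable]: "A \<in> sets borel" by simp
  have fm: "snd \<in> (lborel \<Otimes>\<^sub>M lborel) \<rightarrow>\<^sub>M (lborel :: real measure)" by measurable
  have "emeasure (distr (density (lborel \<Otimes>\<^sub>M lborel) (\<lambda>z. ennreal (P (fst z)) * ennreal (Q (snd z)))) lborel snd) A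
     = (\<integral>\<^sup>+ z. ennreal (P (fst z)) * ennreal (Q (snd z)) * indicator A (snd z) \<partial>(lborel \<Otimes>\<^sub>M lborel))"
    apply (subst emeasure_distr)
      apply simp
     apply simp
    apply (subst emeasure_density)
      apply simp
     using measurable_sets[OF fm, of A] A apply simp
    apply (rule nn_integral_cong)
    apply (simp add: indicator_def)
    done
  also have "\<dots> = (\<integral>\<^sup>+ u. \<integral>\<^sup>+ v. ennreal (P u) * (ennreal (Q v) * indicator A v) \<partial>lborel \<partial>lborel)"
    by (subst lborel.nn_integral_fst[symmetric]) (auto intro!: nn_integral_cong simp: ac_simps)
  also have "\<dots> = (\<integral>\<^sup>+ u. ennreal (P u) * (\<integral>\<^sup>+ v. ennreal (Q v) * indicator A v \<partial>lborel) \<partial>lborel)"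
    by (intro nn_integral_cong) (simp add: nn_integral_cmult)
  also have "\<dots> = (\<integral>\<^sup>+ u. ennreal (P u) \<partial>lborel) * (\<integral>\<^sup>+ v. ennreal (Q v) * indicator A v \<partial>lborel)"
    by (simp add: nn_integral_multc)
  also have "\<dots> = (\<integral>\<^sup>+ v. (\<integral>\<^sup>+ u. ennreal (P u) \<partial>lborel) * ennreal (Q v) * indicator A v \<partial>lborel)"
    by (subst nn_integral_cmult[symmetric]) (auto intro!: nn_integral_cong simp: ac_simps)
  also have "\<dots> = emeasure (density lborel (\<lambda>v. (\<integral>\<^sup>+ u. ennreal (P u) \<partial>lborel) * ennreal (Q v))) A"
    by (subst emeasure_density) (auto intro!: nn_integral_cong simp: ac_simps)
  finally show "emeasure (distr (density (lborel \<Otimes>\<^sub>M lborel) (\<lambda>z. ennreal (P (fst z)) * ennreal (Q (snd z)))) lborel snd) A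
     = emeasure (density lborel (\<lambda>v. (\<integral>\<^sup>+ u. ennreal (P u) \<partial>lborel) * ennreal (Q v))) A" .
qed


lemma wrapper:
  fixes M :: "'a measure" and X Y :: "'a \<Rightarrow> real" and T :: "real \<times> real \<Rightarrow> real \<times> real"
    and Fx Fy :: "real \<Rightarrow> ennreal" and P Q :: "real \<Rightarrow> real" and k :: real
  assumes M: "prob_space M"
    and dX: "distributed M lborel X Fx" and dY: "distributed M lborel Y Fy"
    and ind: "prob_space.indep_var M borel X borel Y"
    and Tm: "T \<in> (borel \<Otimes>\<^sub>M borel) \<rightarrow>\<^sub>M (borel \<Otimes>\<^sub>M borel)"
    and tr: "distr (density (lborel \<Otimes>\<^sub>M lborel) (\<lambda>z. Fx (fst z) * Fy (snd z))) (lborel \<Otimes>\<^sub>M lborel) T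
           = density (lborel \<Otimes>\<^sub>M lborel) (\<lambda>z. ennreal (k * P (fst z)) * ennreal (Q (snd z)))"
    and k: "0 < k" and Pm[measurable]: "P \<in> borel_measurable borel" and Qm[measurable]: "Q \<in> borel_measurable borel"
    and Pnn: "\<And>u. 0 \<le> P u" and Qnn: "\<And>v. 0 \<le> Q v"
  shows "prob_space.indep_var M borel (\<lambda>\<omega>. fst (T (X \<omega>, Y \<omega>))) borel (\<lambda>\<omega>. snd (T (X \<omega>, Y \<omega>)))
     \<and> has_density_prop M (\<lambda>\<omega>. fst (T (X \<omega>, Y \<omega>))) P \<and> has_density_prop M (\<lambda>\<omega>. snd (T (X \<omega>, Y \<omega>))) Q"
proof -
  interpret prob_space M by (rule M)
  let ?L = "lborel \<Otimes>\<^sub>M lborel :: (real \<times> real) measure"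
  have Xm[measurable]: "X \<in> M \<rightarrow>\<^sub>M borel" using distributed_measurable[OF dX] by simp
  have Ym[measurable]: "Y \<in> M \<rightarrow>\<^sub>M borel" using distributed_measurable[OF dY] by simp
  have Fxm[measurable]: "Fx \<in> borel_measurable borel" using distributed_borel_measurable[OF dX] by simp
  have Fym[measurable]: "Fy \<in> borel_measurable borel" using distributed_borel_measurable[OF dY] by simp
  note [measurable] = Tm
  have dXb: "distr M borel X = density lborel Fx"
    using distributed_distr_eq_density[OF dX] by (metis distr_cong sets_lborel)
  have dYb: "distr M borel Y = density lborel Fy"
    using distributed_distr_eq_density[OF dY] by (metis distr_cong sets_lborel)
  have sfY: "sigma_finite_measure (density lborel Fy)"
  proof -
    have "prob_space (distr M borel Y)" by (rule prob_space_distr) simp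
    thus ?thesis using dYb by (simp add: prob_space_imp_sigma_finite)
  qed
  have j1: "distr M borel X \<Otimes>\<^sub>M distr M borel Y = distr M (borel \<Otimes>\<^sub>M borel) (\<lambda>x. (X x, Y x))"
    using ind indep_var_distribution_eq by blast
  have joint: "distr M ?L (\<lambda>x. (X x, Y x)) = density ?L (\<lambda>z. Fx (fst z) * Fy (snd z))"
  proof -
    have "distr M ?L (\<lambda>x. (X x, Y x)) = distr M (borel \<Otimes>\<^sub>M borel) (\<lambda>x. (X x, Y x))"
      by (rule distr_cong) (auto intro: sets_pair_measure_cong)
    also have "\<dots> = density lborel Fx \<Otimes>\<^sub>M density lborel Fy" using j1 dXb dYb by simp
    also have "\<dots> = density ?L (\<lambda>(x,y). Fx x * Fy y)"
      by (rule pair_measure_density) (auto simp: sfY intro: lborel.sigma_finite_measure_axioms)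
    also have "(\<lambda>(x,y). Fx x * Fy y) = (\<lambda>z. Fx (fst z) * Fy (snd z))" by (simp add: fun_eq_iff)
    finally show ?thesis .
  qed
  define G where "G = density ?L (\<lambda>z. ennreal (k * P (fst z)) * ennreal (Q (snd z)))"
  have XYm: "(\<lambda>x. (X x, Y x)) \<in> M \<rightarrow>\<^sub>M ?L" by measurable
  have Tm': "T \<in> ?L \<rightarrow>\<^sub>M ?L" using Tm by (simp cong: measurable_cong_sets)
  have UV: "distr M ?L (\<lambda>\<omega>. T (X \<omega>, Y \<omega>)) = G"
  proof -
    have "distr M ?L (\<lambda>\<omega>. T (X \<omega>, Y \<omega>)) = distr (distr M ?L (\<lambda>x. (X x, Y x))) ?L T"
      by (subst distr_distr[OF Tm' XYm]) (simp add: comp_def)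
    thus ?thesis using joint tr G_def by simp
  qed
  have pG: "prob_space G" unfolding UV[symmetric] by (rule prob_space_distr) measurable
  define A0 where "A0 = (\<integral>\<^sup>+ u. ennreal (P u) \<partial>lborel)"
  define B0 where "B0 = (\<integral>\<^sup>+ v. ennreal (Q v) \<partial>lborel)"
  have kP: "(\<lambda>u. k * P u) \<in> borel_measurable borel" by measurable
  have tot: "ennreal k * A0 * B0 = 1"
  proof -
    have "emeasure G (space G) = 1" using pG by (simp add: prob_space.emeasure_space_1)
    moreover have "emeasure G (space G) = (\<integral>\<^sup>+ z. ennreal (k * P (fst z)) * ennreal (Q (snd z)) \<partial>?L)"
      unfolding G_def apply (subst emeasure_density) apply measurable
      using sets.top[of "borel \<Otimes>\<^sub>M borel :: (real\<times>real) measure"] apply (simp add: space_pair_measure)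
      apply (simp add: space_pair_measure)
      done
    moreover have "\<dots> = (\<integral>\<^sup>+ u. \<integral>\<^sup>+ v. ennreal (k * P u) * ennreal (Q v) \<partial>lborel \<partial>lborel)"
      by (subst lborel.nn_integral_fst[symmetric]) auto
    moreover have "\<dots> = (\<integral>\<^sup>+ u. ennreal (k * P u) * B0 \<partial>lborel)"
      unfolding B0_def by (intro nn_integral_cong) (simp add: nn_integral_cmult)
    moreover have "\<dots> = ennreal k * A0 * B0"
      unfolding A0_def using k Pnn
      by (simp add: nn_integral_multc nn_integral_cmult ennreal_mult)
    ultimately show ?thesis by simp
  qed
  have B0fin: "B0 \<noteq> 0" "B0 \<noteq> \<top>" and A0fin: "A0 \<noteq> 0" "A0 \<noteq> \<top>"
  proof -
    have nz: "A0 \<noteq> 0" "B0 \<noteq> 0" using tot by auto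
    have "ennreal k \<noteq> 0" using k by simp
    hence "ennreal k * A0 \<noteq> 0" using nz by simp
    moreover have "ennreal k * A0 * B0 \<noteq> \<top>" using tot by simp
    ultimately have "B0 \<noteq> \<top>" "ennreal k * A0 \<noteq> \<top>" using nz by (auto simp: ennreal_mult_eq_top_iff)
    thus "B0 \<noteq> 0" "B0 \<noteq> \<top>" "A0 \<noteq> 0" "A0 \<noteq> \<top>" using nz \<open>ennreal k \<noteq> 0\<close> by (auto simp: ennreal_mult_eq_top_iff)
  qed
  obtain b where b: "B0 = ennreal b" "0 < b"
    using B0fin by (cases B0 rule: ennreal_cases) (auto simp: less_le)
  obtain a where a: "A0 = ennreal a" "0 < a"
    using A0fin by (cases A0 rule: ennreal_cases) (auto simp: less_le)
  have "ennreal (k * a * b) = ennreal k * ennreal a * ennreal b"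
    using k a b by (simp add: ennreal_mult)
  hence "ennreal (k * a * b) = 1" using tot a b by simp
  hence kab: "k * a * b = 1" using k a b by simp
  let ?U = "\<lambda>\<omega>. fst (T (X \<omega>, Y \<omega>))" and ?V = "\<lambda>\<omega>. snd (T (X \<omega>, Y \<omega>))"
  have TXYm[measurable]: "(\<lambda>\<omega>. T (X \<omega>, Y \<omega>)) \<in> M \<rightarrow>\<^sub>M ?L" using Tm' XYm by measurable
  have Um[measurable]: "?U \<in> M \<rightarrow>\<^sub>M borel" by measurable
  have Vm[measurable]: "?V \<in> M \<rightarrow>\<^sub>M borel" by measurable
  have Ulaw: "distr M lborel ?U = density lborel (\<lambda>u. ennreal (k * b * P u))"
  proof -
    have "distr M lborel ?U = distr (distr M ?L (\<lambda>\<omega>. T (X \<omega>, Y \<omega>))) lborel fst"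
      by (subst distr_distr) (auto simp: comp_def)
    also have "\<dots> = density lborel (\<lambda>u. ennreal (k * P u) * B0)"
      unfolding UV G_def by (rule marg_fst[OF kP Qm, folded B0_def])
    also have "\<dots> = density lborel (\<lambda>u. ennreal (k * b * P u))"
      using b k Pnn by (intro density_cong) (auto simp: ennreal_mult'[symmetric] mult_ac)
    finally show ?thesis .
  qed
  have Vlaw: "distr M lborel ?V = density lborel (\<lambda>v. ennreal (k * a * Q v))"
  proof -
    have "distr M lborel ?V = distr (distr M ?L (\<lambda>\<omega>. T (X \<omega>, Y \<omega>))) lborel snd"
      by (subst distr_distr) (auto simp: comp_def)
    also have "\<dots> = density lborel (\<lambda>v. (\<integral>\<^sup>+ u. ennreal (k * P u) \<partial>lborel) * ennreal (Q v))"
      unfolding UV G_def by (rule marg_snd[OF kP Qm])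
    also have "(\<integral>\<^sup>+ u. ennreal (k * P u) \<partial>lborel) = ennreal k * A0"
      unfolding A0_def using k Pnn by (simp add: nn_integral_cmult ennreal_mult)
    also have "density lborel (\<lambda>v. ennreal k * A0 * ennreal (Q v)) = density lborel (\<lambda>v. ennreal (k * a * Q v))"
      using a k Qnn by (intro density_cong) (auto simp: ennreal_mult'[symmetric] mult_ac)
    finally show ?thesis .
  qed
  have hU: "has_density_prop M ?U P"
    unfolding has_density_prop_def distributed_def
    using Ulaw k b by (intro exI[of _ "k * b"]) (auto simp: mult.assoc)
  have hV: "has_density_prop M ?V Q"
    unfolding has_density_prop_def distributed_def
    using Vlaw k a by (intro exI[of _ "k * a"]) (auto simp: mult.assoc)
  have indep: "indep_var borel ?U borel ?V"
  proof (subst indep_var_distribution_eq, intro conjI)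
    show "random_variable borel ?U" "random_variable borel ?V" by measurable
    have dU: "distr M borel ?U = density lborel (\<lambda>u. ennreal (k * b * P u))"
      using Ulaw by (metis distr_cong sets_lborel)
    have dV: "distr M borel ?V = density lborel (\<lambda>v. ennreal (k * a * Q v))"
      using Vlaw by (metis distr_cong sets_lborel)
    have sfV: "sigma_finite_measure (density lborel (\<lambda>v. ennreal (k * a * Q v)))"
    proof -
      have "prob_space (distr M borel ?V)" by (rule prob_space_distr) simp
      thus ?thesis using dV by (simp add: prob_space_imp_sigma_finite)
    qed
    have "distr M borel ?U \<Otimes>\<^sub>M distr M borel ?V
       = density ?L (\<lambda>(u,v). ennreal (k * b * P u) * ennreal (k * a * Q v))"
      unfolding dU dV
      by (rule pair_measure_density) (auto simp: sfV intro: lborel.sigma_finite_measure_axioms)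
    also have "\<dots> = G" unfolding G_def
    proof (intro density_cong)
      show "(\<lambda>(u,v). ennreal (k * b * P u) * ennreal (k * a * Q v)) \<in> borel_measurable ?L" by measurable
      show "(\<lambda>z. ennreal (k * P (fst z)) * ennreal (Q (snd z))) \<in> borel_measurable ?L" by measurable
      show "AE z in ?L. (case z of (u,v) \<Rightarrow> ennreal (k * b * P u) * ennreal (k * a * Q v)) = ennreal (k * P (fst z)) * ennreal (Q (snd z))"
      proof (intro AE_I2, clarsimp)
        fix u v
        have "k * b * P u * (k * a * Q v) = (k * a * b) * (k * P u) * Q v" by (simp add: mult_ac)
        also have "\<dots> = k * P u * Q v" using kab by simp
        finally show "ennreal (k * b * P u) * ennreal (k * a * Q v) = ennreal (k * P u) * ennreal (Q v)"
          using k a b Pnn Qnn by (simp add: ennreal_mult'[symmetric] ennreal_mult[symmetric])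
      qed
    qed
    also have "G = distr M (borel \<Otimes>\<^sub>M borel) (\<lambda>x. (?U x, ?V x))"
      unfolding UV[symmetric] by (rule distr_cong) (auto intro: sets_pair_measure_cong)
    finally show "distr M borel ?U \<Otimes>\<^sub>M distr M borel ?V = distr M (borel \<Otimes>\<^sub>M borel) (\<lambda>x. (?U x, ?V x))" .
  qed
  show ?thesis using indep hU hV by simp
qed

lemma distr3:
  assumes m1: "T1 \<in> N \<rightarrow>\<^sub>M N" and m2: "T2 \<in> N \<rightarrow>\<^sub>M N" and m3: "T3 \<in> N \<rightarrow>\<^sub>M N"
  shows "distr (distr (distr (density N f) N T1) N T2) N T3 = distr (density N f) N (T3 \<circ> T2 \<circ> T1)"
proof -
  have m1': "T1 \<in> density N f \<rightarrow>\<^sub>M N" using m1 by simp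
  have "distr (distr (density N f) N T1) N T2 = distr (density N f) N (T2 \<circ> T1)"
    by (rule distr_distr[OF m2 m1'])
  moreover have "T2 \<circ> T1 \<in> density N f \<rightarrow>\<^sub>M N" using m1' m2 by (rule measurable_comp)
  ultimately show ?thesis by (simp add: distr_distr[OF m3] comp_assoc)
qed

lemma chainB:
  fixes h :: "real \<times> real \<Rightarrow> real"
  assumes hm[measurable]: "h \<in> borel_measurable (borel \<Otimes>\<^sub>M borel)" and hnn: "\<And>p. 0 \<le> h p"
    and supp: "\<And>x y. \<not> (0 < x \<and> 0 < y) \<Longrightarrow> h (x,y) = 0"
  shows "distr (density (lborel \<Otimes>\<^sub>M lborel) (\<lambda>z. ennreal (h z))) (lborel \<Otimes>\<^sub>M lborel) (\<lambda>z. F_KGa_A (fst z) (snd z))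
     = density (lborel \<Otimes>\<^sub>M lborel) (\<lambda>z. ennreal (if 0 < fst z \<and> 0 < snd z then
          fst z * (1 + fst z) / (1 + fst z + snd z)^2 * h (fst z * snd z / (1 + fst z + snd z), fst z - fst z * snd z / (1 + fst z + snd z)) else 0))"
proof -
  let ?L = "lborel \<Otimes>\<^sub>M lborel :: (real \<times> real) measure"
  define h1 where "h1 = (\<lambda>z::real\<times>real. if 0 < fst z \<and> fst z < snd z then h (fst z, snd z - fst z) else 0)"
  define h2 where "h2 = (\<lambda>z::real\<times>real. if 0 < snd z \<and> 0 < fst z then
       snd z * (1 + snd z) / (1 + snd z + fst z)^2 * h1 (snd z * fst z / (1 + snd z + fst z), snd z) else 0)"
  have h1m[measurable]: "h1 \<in> borel_measurable (borel \<Otimes>\<^sub>M borel)" unfolding h1_def by measurable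
  have h2m[measurable]: "h2 \<in> borel_measurable (borel \<Otimes>\<^sub>M borel)" unfolding h2_def by measurable
  have h1nn: "\<And>p. 0 \<le> h1 p" unfolding h1_def using hnn by auto
  have h2nn: "\<And>p. 0 \<le> h2 p" unfolding h2_def using h1nn by auto
  have s1: "distr (density ?L (\<lambda>z. ennreal (h z))) ?L (\<lambda>p. (fst p, (\<lambda>x y. x + y) (fst p) (snd p)))
      = density ?L (\<lambda>z. ennreal (h1 z))"
  proof (rule fiber2[where D="\<lambda>x. {y. 0 < x \<and> 0 < y}" and R="\<lambda>x. {u. 0 < x \<and> x < u}"
        and \<psi>="\<lambda>x u. u - x" and \<psi>'="\<lambda>x u. 1"])
    show "(\<lambda>p::real\<times>real. fst p + snd p) \<in> borel_measurable (borel \<Otimes>\<^sub>M borel)" by measurable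
    show "\<And>x::real. {u::real. 0 < x \<and> x < u} \<in> sets lebesgue" by simp
    show "\<And>x z::real. z \<in> {u. 0 < x \<and> x < u} \<Longrightarrow> ((\<lambda>u. u - x) has_real_derivative 1) (at z within {u. 0 < x \<and> x < u})"
      by (auto intro!: derivative_eq_intros)
  qed (use hnn supp in \<open>auto simp: h1_def\<close>)
  have s2: "distr (density ?L (\<lambda>z. ennreal (h1 z))) ?L (\<lambda>p. ((\<lambda>u x. x * (u + 1) / (u - x)) (snd p) (fst p), snd p))
      = density ?L (\<lambda>z. ennreal (h2 z))"
  proof (rule fiber1[where D="\<lambda>u. {x. 0 < x \<and> x < u}" and R="\<lambda>u. {v. 0 < u \<and> 0 < v}"
        and \<psi>="\<lambda>u v. u * v / (1 + u + v)" and \<psi>'="\<lambda>u v. u * (1 + u) / (1 + u + v)^2"])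
    show "(\<lambda>p::real\<times>real. fst p * (snd p + 1) / (snd p - fst p)) \<in> borel_measurable (borel \<Otimes>\<^sub>M borel)" by measurable
    show "\<And>u::real. {v::real. 0 < u \<and> 0 < v} \<in> sets lebesgue" by simp
    show "\<And>u z::real. z \<in> {v. 0 < u \<and> 0 < v} \<Longrightarrow> ((\<lambda>v. u * v / (1 + u + v)) has_real_derivative u * (1 + u) / (1 + u + z)^2) (at z within {v. 0 < u \<and> 0 < v})"
      by (auto intro!: derivative_eq_intros simp: field_simps power2_eq_square)
    show "\<And>x y. x \<notin> {x. 0 < x \<and> x < y} \<Longrightarrow> h1 (x, y) = 0" by (auto simp: h1_def)
    show "\<And>x y::real. x \<in> {x. 0 < x \<and> x < y} \<Longrightarrow>
         x * (y + 1) / (y - x) \<in> {v. 0 < y \<and> 0 < v} \<and> y * (x * (y + 1) / (y - x)) / (1 + y + x * (y + 1) / (y - x)) = x"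
    proof -
      fix x y :: real assume "x \<in> {x. 0 < x \<and> x < y}"
      hence xy: "0 < x" "x < y" by auto
      have d: "0 < y - x" using xy by simp
      have p: "0 < x * (y + 1) / (y - x)" using xy d by (intro divide_pos_pos mult_pos_pos) auto
      have e: "1 + y + x * (y + 1) / (y - x) = y * (y + 1) / (y - x)" using d by (simp add: field_simps)
      have c: "0 < y * (y + 1) / (y - x)" using xy d by (intro divide_pos_pos mult_pos_pos) auto
      have eq: "y * (x * (y + 1) / (y - x)) = x * (y * (y + 1) / (y - x))" by simp
      have "y * (x * (y + 1) / (y - x)) / (y * (y + 1) / (y - x)) = x"
        by (subst eq, rule nonzero_mult_div_cancel_right) (use c in linarith)
      thus "x * (y + 1) / (y - x) \<in> {v. 0 < y \<and> 0 < v} \<and> y * (x * (y + 1) / (y - x)) / (1 + y + x * (y + 1) / (y - x)) = x"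
        using p xy e by simp
    qed
    show "\<And>y z::real. z \<in> {v. 0 < y \<and> 0 < v} \<Longrightarrow>
         y * z / (1 + y + z) \<in> {x. 0 < x \<and> x < y} \<and> y * z / (1 + y + z) * (y + 1) / (y - y * z / (1 + y + z)) = z"
    proof -
      fix y z :: real assume "z \<in> {v. 0 < y \<and> 0 < v}"
      hence yz: "0 < y" "0 < z" by auto
      have N: "0 < 1 + y + z" using yz by simp
      have a: "0 < y * z / (1 + y + z)" using yz N by simp
      have b: "y - y * z / (1 + y + z) = y * (1 + y) / (1 + y + z)" using N by (simp add: field_simps)
      have c: "0 < y * (1 + y) / (1 + y + z)" using yz N by simp
      have eq: "y * z / (1 + y + z) * (y + 1) = z * (y * (1 + y) / (1 + y + z))" by (simp add: field_simps)
      have "y * z / (1 + y + z) * (y + 1) / (y * (1 + y) / (1 + y + z)) = z"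
        by (subst eq, rule nonzero_mult_div_cancel_right) (use c in linarith)
      then show "y * z / (1 + y + z) \<in> {x. 0 < x \<and> x < y} \<and> y * z / (1 + y + z) * (y + 1) / (y - y * z / (1 + y + z)) = z"
      proof -
        have "y * z / (1 + y + z) < y" using b c by linarith
        thus ?thesis using a yz \<open>y * z / (1 + y + z) * (y + 1) / (y * (1 + y) / (1 + y + z)) = z\<close> b by simp
      qed
    qed
    show "\<And>z y. h2 (z, y) = (if z \<in> {v. 0 < y \<and> 0 < v} then \<bar>y * (1 + y) / (1 + y + z)^2\<bar> * h1 (y * z / (1 + y + z), y) else 0)"
      by (auto simp: h2_def mult.commute add_ac)
  qed (use h1nn in auto)
  have s3: "distr (density ?L (\<lambda>z. ennreal (h2 z))) ?L (\<lambda>p. (snd p, fst p))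
      = density ?L (\<lambda>p. ennreal (h2 (snd p, fst p)))"
    by (rule swap_density[OF h2m h2nn])
  have m1: "(\<lambda>p. (fst p, (\<lambda>x y. x + y) (fst p) (snd p))) \<in> ?L \<rightarrow>\<^sub>M ?L" by measurable
  have m2: "(\<lambda>p. ((\<lambda>u x. x * (u + 1) / (u - x)) (snd p) (fst p), snd p)) \<in> ?L \<rightarrow>\<^sub>M ?L" by measurable
  have m3: "(\<lambda>p. (snd p, fst p)) \<in> ?L \<rightarrow>\<^sub>M ?L" by measurable
  have comp: "(\<lambda>z. F_KGa_A (fst z) (snd z)) = (\<lambda>p. (snd p, fst p)) \<circ> (\<lambda>p. ((\<lambda>u x. x * (u + 1) / (u - x)) (snd p) (fst p), snd p)) \<circ> (\<lambda>p. (fst p, (\<lambda>x y. x + y) (fst p) (snd p)))"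
    by (auto simp: fun_eq_iff F_KGa_A_def)
  have "distr (density ?L (\<lambda>z. ennreal (h z))) ?L (\<lambda>z. F_KGa_A (fst z) (snd z))
     = distr (distr (distr (density ?L (\<lambda>z. ennreal (h z))) ?L (\<lambda>p. (fst p, (\<lambda>x y. x + y) (fst p) (snd p)))) ?L
         (\<lambda>p. ((\<lambda>u x. x * (u + 1) / (u - x)) (snd p) (fst p), snd p))) ?L (\<lambda>p. (snd p, fst p))"
    unfolding comp by (rule distr3[OF m1 m2 m3, symmetric])
  also have "\<dots> = density ?L (\<lambda>p. ennreal (h2 (snd p, fst p)))" using s1 s2 s3 by simp
  also have "\<dots> = density ?L (\<lambda>z. ennreal (if 0 < fst z \<and> 0 < snd z then
          fst z * (1 + fst z) / (1 + fst z + snd z)^2 * h (fst z * snd z / (1 + fst z + snd z), fst z - fst z * snd z / (1 + fst z + snd z)) else 0))"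
  proof (rule arg_cong[where f="density ?L"], rule ext)
    fix p :: "real \<times> real"
    obtain u v where p: "p = (u,v)" by (cases p)
    have "0 < u \<Longrightarrow> 0 < v \<Longrightarrow> 0 < u * v / (1 + u + v) \<and> u * v / (1 + u + v) < u"
      by (auto simp: field_simps add_pos_pos mult_pos_pos)
    thus "ennreal (h2 (snd p, fst p)) = ennreal (if 0 < fst p \<and> 0 < snd p then
          fst p * (1 + fst p) / (1 + fst p + snd p)^2 * h (fst p * snd p / (1 + fst p + snd p), fst p - fst p * snd p / (1 + fst p + snd p)) else 0)"
      by (auto simp: p h2_def h1_def)
  qed
  finally show ?thesis .
qed

lemma hlp1: "(s::real) \<noteq> 0 \<Longrightarrow> N \<noteq> 0 \<Longrightarrow> D \<noteq> 0 \<Longrightarrow> s / (s * N / D) = D / N"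
  by (simp add: field_simps)

lemma hlp2: "(v::real) \<noteq> 0 \<Longrightarrow> W \<noteq> 0 \<Longrightarrow> B \<noteq> 0 \<Longrightarrow> s \<noteq> 0 \<Longrightarrow> N \<noteq> 0 \<Longrightarrow>
  W / v^2 * (s / W) * (A / B) * (s / (s * N / (v * B))^2) = A * B / N^2"
  by (simp add: field_simps power2_eq_square)

lemma algA:
  fixes \<alpha> \<beta> u v :: real
  assumes a: "0 < \<alpha>" and b: "0 < \<beta>" and u: "0 < u" and v: "0 < v"
  defines "\<rho> \<equiv> (u + v) / v - 1"
  defines "s \<equiv> (u + v) * (\<beta> + \<alpha> * \<rho>) / (1 + \<rho>)"
  defines "r \<equiv> \<rho> * (\<alpha> + s) / (\<beta> + s)"
  shows "0 < \<rho>" "s = \<alpha> * u + \<beta> * v" "0 < s" "0 < r" "0 < s * r / (1 + r)" "s * r / (1 + r) < s"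
    "s - s * r / (1 + r) = v * (\<beta> + \<alpha> * u + \<beta> * v) / (1 + u + v)"
    "s * r / (1 + r) = u * (\<alpha> + \<alpha> * u + \<beta> * v) / (1 + u + v)"
    "(u + v) / v^2 * ((\<beta> + \<alpha> * \<rho>) / (1 + \<rho>)) * ((\<alpha> + s) / (\<beta> + s)) * (s / (1 + r)^2)
       = (\<alpha> + \<alpha> * u + \<beta> * v) * (\<beta> + \<alpha> * u + \<beta> * v) / (1 + u + v)^2"
proof -
  have \<rho>: "\<rho> = u / v" unfolding \<rho>_def using v by (simp add: field_simps)
  show "0 < \<rho>" using \<rho> u v by simp
  have e1: "\<beta> + \<alpha> * \<rho> = (\<alpha> * u + \<beta> * v) / v" using \<rho> v by (simp add: field_simps)
  have e2: "1 + \<rho> = (u + v) / v" using \<rho> v by (simp add: field_simps)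
  have q: "(\<beta> + \<alpha> * \<rho>) / (1 + \<rho>) = (\<alpha> * u + \<beta> * v) / (u + v)"
  proof -
    have hq: "\<And>A B. B \<noteq> 0 \<Longrightarrow> (A / v) / (B / v) = A / B" using v by (simp add: field_simps)
    show ?thesis unfolding e1 e2 by (rule hq) (use u v in simp)
  qed
  show ss: "s = \<alpha> * u + \<beta> * v" unfolding s_def using q u v
    by (metis (no_types, lifting) add_pos_pos less_irrefl nonzero_mult_div_cancel_left times_divide_eq_right)
  show sp: "0 < s" using ss a b u v by (simp add: add_pos_pos)
  have bs: "0 < \<beta> + s" "0 < \<alpha> + s" using sp a b by auto
  have N: "0 < 1 + u + v" using u v by simp
  show rp: "0 < r" unfolding r_def using \<open>0 < \<rho>\<close> bs by simp
  have r1: "1 + r = s * (1 + u + v) / (v * (\<beta> + s))"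
  proof -
    have Dp: "v * (\<beta> + s) \<noteq> 0" using v bs by simp
    have rr: "r = u * (\<alpha> + s) / (v * (\<beta> + s))" unfolding r_def \<rho> by simp
    have "1 + r = (v * (\<beta> + s) + u * (\<alpha> + s)) / (v * (\<beta> + s))"
      unfolding rr using Dp by (simp add: add_divide_distrib)
    also have "v * (\<beta> + s) + u * (\<alpha> + s) = s * (1 + u + v)" using ss by (simp add: algebra_simps)
    finally show ?thesis .
  qed
  have r1p: "0 < 1 + r" using rp by simp
  have X: "s - s * r / (1 + r) = s / (1 + r)" using r1p by (simp add: field_simps)
  also have "s / (1 + r) = v * (\<beta> + s) / (1 + u + v)" unfolding r1 using sp N v bs by (intro hlp1) auto
  finally show Xe: "s - s * r / (1 + r) = v * (\<beta> + \<alpha> * u + \<beta> * v) / (1 + u + v)" using ss by (simp add: add_ac)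
  show Ye: "s * r / (1 + r) = u * (\<alpha> + \<alpha> * u + \<beta> * v) / (1 + u + v)"
  proof -
    have "s * r / (1 + r) = s - v * (\<beta> + \<alpha> * u + \<beta> * v) / (1 + u + v)" using Xe by linarith
    also have "\<dots> = u * (\<alpha> + \<alpha> * u + \<beta> * v) / (1 + u + v)" using ss N by (simp add: field_simps)
    finally show ?thesis .
  qed
  show "0 < s * r / (1 + r)" using sp rp by simp
  show "s * r / (1 + r) < s" using X sp r1p by (smt (verit) divide_pos_pos)
  show "(u + v) / v^2 * ((\<beta> + \<alpha> * \<rho>) / (1 + \<rho>)) * ((\<alpha> + s) / (\<beta> + s)) * (s / (1 + r)^2)
       = (\<alpha> + \<alpha> * u + \<beta> * v) * (\<beta> + \<alpha> * u + \<beta> * v) / (1 + u + v)^2"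
  proof -
    have "(\<alpha> + \<alpha> * u + \<beta> * v) * (\<beta> + \<alpha> * u + \<beta> * v) = (\<alpha> + s) * (\<beta> + s)" using ss by (simp add: add_ac)
    moreover have "(u + v) / v^2 * ((\<alpha> * u + \<beta> * v) / (u + v)) * ((\<alpha> + s) / (\<beta> + s)) * (s / (s * (1 + u + v) / (v * (\<beta> + s)))^2)
       = (\<alpha> + s) * (\<beta> + s) / (1 + u + v)^2"
      unfolding ss[symmetric] using u v N sp bs by (intro hlp2) auto
    ultimately show ?thesis unfolding q r1 by simp
  qed
qed


lemma mapA:
  fixes \<alpha> \<beta> x y :: real
  assumes a: "0 < \<alpha>" and b: "0 < \<beta>" and x: "0 < x" and y: "0 < y"
  defines "s \<equiv> x + y"
  defines "r \<equiv> y / (s - y)"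
  defines "\<rho> \<equiv> r * (\<beta> + s) / (\<alpha> + s)"
  defines "t \<equiv> s * (1 + \<rho>) / (\<beta> + \<alpha> * \<rho>)"
  shows "(t - t / (1 + \<rho>), t / (1 + \<rho>)) = H_II \<alpha> \<beta> x y"
proof -
  define D where "D = \<alpha> * \<beta> + \<beta> * x + \<alpha> * y"
  have Dp: "0 < D" unfolding D_def using a b x y by (simp add: add_pos_pos)
  have sp: "0 < s" unfolding s_def using x y by simp
  have r: "r = y / x" unfolding r_def s_def by simp
  have \<rho>: "\<rho> = y * (\<beta> + s) / (x * (\<alpha> + s))" unfolding \<rho>_def r by simp
  have \<rho>p: "0 < \<rho>" unfolding \<rho> using a b x y sp by simp
  have xa: "x * (\<alpha> + s) \<noteq> 0" using x a sp by simp
  have B: "\<beta> + \<alpha> * \<rho> = s * D / (x * (\<alpha> + s))"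
  proof -
    have "\<beta> + \<alpha> * \<rho> = (\<beta> * (x * (\<alpha> + s)) + \<alpha> * (y * (\<beta> + s))) / (x * (\<alpha> + s))"
      unfolding \<rho> using xa by (simp add: add_divide_distrib)
    also have "\<beta> * (x * (\<alpha> + s)) + \<alpha> * (y * (\<beta> + s)) = s * D" unfolding D_def s_def by (simp add: algebra_simps)
    finally show ?thesis .
  qed
  have Bp: "0 < \<beta> + \<alpha> * \<rho>" using b a \<rho>p by (simp add: add_pos_pos)
  have v: "t / (1 + \<rho>) = s / (\<beta> + \<alpha> * \<rho>)" unfolding t_def using \<rho>p Bp by simp
  also have "\<dots> = x * (\<alpha> + s) / D" unfolding B using sp Dp xa by (intro hlp1) auto
  finally have v: "t / (1 + \<rho>) = x * (\<alpha> + s) / D" .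
  have tt: "t / (1 + \<rho>) * (1 + \<rho>) = t" using \<rho>p by simp
  have "t / (1 + \<rho>) * \<rho> = t / (1 + \<rho>) * (1 + \<rho>) - t / (1 + \<rho>)" by (simp add: algebra_simps add_divide_distrib)
  hence "t - t / (1 + \<rho>) = t / (1 + \<rho>) * \<rho>" using tt by simp
  also have "\<dots> = x * (\<alpha> + s) / D * \<rho>" by (simp only: v)
  also have "\<dots> = x * (\<alpha> + s) / D * (y * (\<beta> + s) / (x * (\<alpha> + s)))" by (simp only: \<rho>)
  also have "\<dots> = y * (\<beta> + s) / D" using xa by simp
  finally have u: "t - t / (1 + \<rho>) = y * (\<beta> + s) / D" .
  have P: "(t - t / (1 + \<rho>), t / (1 + \<rho>)) = (y * (\<beta> + s) / D, x * (\<alpha> + s) / D)" using u v by simp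
  have Q: "H_II \<alpha> \<beta> x y = (y * (\<beta> + s) / D, x * (\<alpha> + s) / D)"
    unfolding H_II_def D_def s_def by (simp add: add_ac)
  show ?thesis by (rule trans[OF P Q[symmetric]])
qed

lemma chainA:
  fixes h :: "real \<times> real \<Rightarrow> real" and \<alpha> \<beta> :: real
  assumes a: "0 < \<alpha>" and b: "0 < \<beta>"
  assumes hm[measurable]: "h \<in> borel_measurable (borel \<Otimes>\<^sub>M borel)" and hnn: "\<And>p. 0 \<le> h p"
    and supp: "\<And>x y. \<not> (0 < x \<and> 0 < y) \<Longrightarrow> h (x,y) = 0"
  shows "distr (density (lborel \<Otimes>\<^sub>M lborel) (\<lambda>z. ennreal (h z))) (lborel \<Otimes>\<^sub>M lborel) (\<lambda>z. H_II \<alpha> \<beta> (fst z) (snd z))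
     = density (lborel \<Otimes>\<^sub>M lborel) (\<lambda>z. ennreal (if 0 < fst z \<and> 0 < snd z then
          (\<alpha> + \<alpha> * fst z + \<beta> * snd z) * (\<beta> + \<alpha> * fst z + \<beta> * snd z) / (1 + fst z + snd z)^2
          * h (snd z * (\<beta> + \<alpha> * fst z + \<beta> * snd z) / (1 + fst z + snd z),
               fst z * (\<alpha> + \<alpha> * fst z + \<beta> * snd z) / (1 + fst z + snd z)) else 0))"
proof -
  let ?L = "lborel \<Otimes>\<^sub>M lborel :: (real \<times> real) measure"
  define h1 where "h1 = (\<lambda>z::real\<times>real. if 0 < snd z \<and> snd z < fst z then h (fst z - snd z, snd z) else 0)"
  define h2 where "h2 = (\<lambda>z::real\<times>real. if 0 < fst z \<and> 0 < snd z then
       fst z / (1 + snd z)^2 * h1 (fst z, fst z * snd z / (1 + snd z)) else 0)"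
  define h3 where "h3 = (\<lambda>z::real\<times>real. if 0 < fst z \<and> 0 < snd z then
       (\<alpha> + fst z) / (\<beta> + fst z) * h2 (fst z, snd z * (\<alpha> + fst z) / (\<beta> + fst z)) else 0)"
  define h4 where "h4 = (\<lambda>z::real\<times>real. if 0 < snd z \<and> 0 < fst z then
       (\<beta> + \<alpha> * snd z) / (1 + snd z) * h3 (fst z * (\<beta> + \<alpha> * snd z) / (1 + snd z), snd z) else 0)"
  define h5 where "h5 = (\<lambda>z::real\<times>real. if 0 < snd z \<and> snd z < fst z then
       fst z / (snd z)^2 * h4 (fst z, fst z / snd z - 1) else 0)"
  define h6 where "h6 = (\<lambda>z::real\<times>real. if 0 < snd z \<and> 0 < fst z then h5 (fst z + snd z, snd z) else 0)"
  have h1m[measurable]: "h1 \<in> borel_measurable (borel \<Otimes>\<^sub>M borel)" unfolding h1_def by measurable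
  have h2m[measurable]: "h2 \<in> borel_measurable (borel \<Otimes>\<^sub>M borel)" unfolding h2_def by measurable
  have h3m[measurable]: "h3 \<in> borel_measurable (borel \<Otimes>\<^sub>M borel)" unfolding h3_def by measurable
  have h4m[measurable]: "h4 \<in> borel_measurable (borel \<Otimes>\<^sub>M borel)" unfolding h4_def by measurable
  have h5m[measurable]: "h5 \<in> borel_measurable (borel \<Otimes>\<^sub>M borel)" unfolding h5_def by measurable
  have h6m[measurable]: "h6 \<in> borel_measurable (borel \<Otimes>\<^sub>M borel)" unfolding h6_def by measurable
  have h1nn: "\<And>p. 0 \<le> h1 p" unfolding h1_def using hnn by auto
  have h2nn: "\<And>p. 0 \<le> h2 p" unfolding h2_def using h1nn by auto
  have h3nn: "\<And>p. 0 \<le> h3 p" unfolding h3_def using h2nn a b by (auto intro!: mult_nonneg_nonneg divide_nonneg_nonneg)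
  have h4nn: "\<And>p. 0 \<le> h4 p" unfolding h4_def using h3nn a b by (auto intro!: mult_nonneg_nonneg divide_nonneg_nonneg)
  have h5nn: "\<And>p. 0 \<le> h5 p" unfolding h5_def using h4nn by auto
  define T1 where "T1 = (\<lambda>p::real\<times>real. ((\<lambda>y x. x + y) (snd p) (fst p), snd p))"
  define T2 where "T2 = (\<lambda>p::real\<times>real. (fst p, (\<lambda>s y. y / (s - y)) (fst p) (snd p)))"
  define T3 where "T3 = (\<lambda>p::real\<times>real. (fst p, (\<lambda>s r. r * (\<beta> + s) / (\<alpha> + s)) (fst p) (snd p)))"
  define T4 where "T4 = (\<lambda>p::real\<times>real. ((\<lambda>\<rho> s. s * (1 + \<rho>) / (\<beta> + \<alpha> * \<rho>)) (snd p) (fst p), snd p))"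
  define T5 where "T5 = (\<lambda>p::real\<times>real. (fst p, (\<lambda>t \<rho>. t / (1 + \<rho>)) (fst p) (snd p)))"
  define T6 where "T6 = (\<lambda>p::real\<times>real. ((\<lambda>v t. t - v) (snd p) (fst p), snd p))"
  have s1: "distr (density ?L (\<lambda>z. ennreal (h z))) ?L T1 = density ?L (\<lambda>z. ennreal (h1 z))"
    unfolding T1_def
  proof (rule fiber1[where D="\<lambda>y. {x. 0 < x \<and> 0 < y}" and R="\<lambda>y. {s. 0 < y \<and> y < s}"
        and \<psi>="\<lambda>y s. s - y" and \<psi>'="\<lambda>y s. 1"])
    show "(\<lambda>p::real\<times>real. fst p + snd p) \<in> borel_measurable (borel \<Otimes>\<^sub>M borel)" by measurable
    show "\<And>y::real. {s::real. 0 < y \<and> y < s} \<in> sets lebesgue" by simp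
    show "\<And>y z::real. z \<in> {s. 0 < y \<and> y < s} \<Longrightarrow> ((\<lambda>s. s - y) has_real_derivative 1) (at z within {s. 0 < y \<and> y < s})"
      by (auto intro!: derivative_eq_intros)
  qed (use hnn supp in \<open>auto simp: h1_def\<close>)
  have s2: "distr (density ?L (\<lambda>z. ennreal (h1 z))) ?L T2 = density ?L (\<lambda>z. ennreal (h2 z))"
    unfolding T2_def
  proof (rule fiber2[where D="\<lambda>s. {y. 0 < y \<and> y < s}" and R="\<lambda>s. {r. 0 < s \<and> 0 < r}"
        and \<psi>="\<lambda>s r. s * r / (1 + r)" and \<psi>'="\<lambda>s r. s / (1 + r)^2"])
    show "(\<lambda>p::real\<times>real. snd p / (fst p - snd p)) \<in> borel_measurable (borel \<Otimes>\<^sub>M borel)" by measurable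
    show "\<And>s::real. {r::real. 0 < s \<and> 0 < r} \<in> sets lebesgue" by simp
    show "\<And>s z::real. z \<in> {r. 0 < s \<and> 0 < r} \<Longrightarrow> ((\<lambda>r. s * r / (1 + r)) has_real_derivative s / (1 + z)^2) (at z within {r. 0 < s \<and> 0 < r})"
      by (auto intro!: derivative_eq_intros simp: field_simps power2_eq_square)
    show "\<And>x y. y \<notin> {y. 0 < y \<and> y < x} \<Longrightarrow> h1 (x, y) = 0" by (auto simp: h1_def)
    show "\<And>s y::real. y \<in> {y. 0 < y \<and> y < s} \<Longrightarrow> y / (s - y) \<in> {r. 0 < s \<and> 0 < r} \<and> s * (y / (s - y)) / (1 + y / (s - y)) = y"
    proof -
      fix s y :: real assume "y \<in> {y. 0 < y \<and> y < s}"
      hence ys: "0 < y" "y < s" by auto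
      have d: "s - y \<noteq> 0" using ys by simp
      have e: "1 + y / (s - y) = s * 1 / (s - y)" using d by (simp add: field_simps)
      have "s * (y / (s - y)) / (s * 1 / (s - y)) = y" using d ys by simp
      thus "y / (s - y) \<in> {r. 0 < s \<and> 0 < r} \<and> s * (y / (s - y)) / (1 + y / (s - y)) = y"
        using ys e by simp
    qed
    show "\<And>s z::real. z \<in> {r. 0 < s \<and> 0 < r} \<Longrightarrow> s * z / (1 + z) \<in> {y. 0 < y \<and> y < s} \<and> s * z / (1 + z) / (s - s * z / (1 + z)) = z"
    proof -
      fix s z :: real assume "z \<in> {r. 0 < s \<and> 0 < r}"
      hence sz: "0 < s" "0 < z" by auto
      have e: "s - s * z / (1 + z) = s / (1 + z)" using sz by (simp add: field_simps)
      have p: "0 < s / (1 + z)" using sz by simp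
      have eq: "s * z / (1 + z) / (s / (1 + z)) = z" using sz by simp
      have lt: "s * z / (1 + z) < s" using e p by linarith
      show "s * z / (1 + z) \<in> {y. 0 < y \<and> y < s} \<and> s * z / (1 + z) / (s - s * z / (1 + z)) = z"
      proof (intro conjI)
        show "s * z / (1 + z) \<in> {y. 0 < y \<and> y < s}" using lt sz by simp
        show "s * z / (1 + z) / (s - s * z / (1 + z)) = z" unfolding e by (rule eq)
      qed
    qed
    show "\<And>x z. h2 (x, z) = (if z \<in> {r. 0 < x \<and> 0 < r} then \<bar>x / (1 + z)^2\<bar> * h1 (x, x * z / (1 + z)) else 0)"
      by (auto simp: h2_def)
  qed (use h1nn in auto)
  have s3: "distr (density ?L (\<lambda>z. ennreal (h2 z))) ?L T3 = density ?L (\<lambda>z. ennreal (h3 z))"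
    unfolding T3_def
  proof (rule fiber2[where D="\<lambda>s. {r. 0 < s \<and> 0 < r}" and R="\<lambda>s. {r. 0 < s \<and> 0 < r}"
        and \<psi>="\<lambda>s \<rho>. \<rho> * (\<alpha> + s) / (\<beta> + s)" and \<psi>'="\<lambda>s \<rho>. (\<alpha> + s) / (\<beta> + s)"])
    show "(\<lambda>p::real\<times>real. snd p * (\<beta> + fst p) / (\<alpha> + fst p)) \<in> borel_measurable (borel \<Otimes>\<^sub>M borel)" by measurable
    show "\<And>s::real. {r::real. 0 < s \<and> 0 < r} \<in> sets lebesgue" by simp
    show "\<And>s z::real. z \<in> {r. 0 < s \<and> 0 < r} \<Longrightarrow> ((\<lambda>\<rho>. \<rho> * (\<alpha> + s) / (\<beta> + s)) has_real_derivative (\<alpha> + s) / (\<beta> + s)) (at z within {r. 0 < s \<and> 0 < r})"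
      using a b by (auto intro!: derivative_eq_intros)
    show "\<And>x y. y \<notin> {r. 0 < x \<and> 0 < r} \<Longrightarrow> h2 (x, y) = 0" by (auto simp: h2_def)
    show "\<And>s y::real. y \<in> {r. 0 < s \<and> 0 < r} \<Longrightarrow> y * (\<beta> + s) / (\<alpha> + s) \<in> {r. 0 < s \<and> 0 < r} \<and> y * (\<beta> + s) / (\<alpha> + s) * (\<alpha> + s) / (\<beta> + s) = y"
      using a b by auto
    show "\<And>s z::real. z \<in> {r. 0 < s \<and> 0 < r} \<Longrightarrow> z * (\<alpha> + s) / (\<beta> + s) \<in> {r. 0 < s \<and> 0 < r} \<and> z * (\<alpha> + s) / (\<beta> + s) * (\<beta> + s) / (\<alpha> + s) = z"
      using a b by auto
    show "\<And>x z. h3 (x, z) = (if z \<in> {r. 0 < x \<and> 0 < r} then \<bar>(\<alpha> + x) / (\<beta> + x)\<bar> * h2 (x, z * (\<alpha> + x) / (\<beta> + x)) else 0)"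
      using a b by (auto simp: h3_def)
  qed (use h2nn in auto)
  have s4: "distr (density ?L (\<lambda>z. ennreal (h3 z))) ?L T4 = density ?L (\<lambda>z. ennreal (h4 z))"
    unfolding T4_def
  proof (rule fiber1[where D="\<lambda>\<rho>. {s. 0 < s \<and> 0 < \<rho>}" and R="\<lambda>\<rho>. {t. 0 < t \<and> 0 < \<rho>}"
        and \<psi>="\<lambda>\<rho> t. t * (\<beta> + \<alpha> * \<rho>) / (1 + \<rho>)" and \<psi>'="\<lambda>\<rho> t. (\<beta> + \<alpha> * \<rho>) / (1 + \<rho>)"])
    show "(\<lambda>p::real\<times>real. fst p * (1 + snd p) / (\<beta> + \<alpha> * snd p)) \<in> borel_measurable (borel \<Otimes>\<^sub>M borel)" by measurable
    show "\<And>\<rho>::real. {t::real. 0 < t \<and> 0 < \<rho>} \<in> sets lebesgue" by simp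
    show "\<And>\<rho> z::real. z \<in> {t. 0 < t \<and> 0 < \<rho>} \<Longrightarrow> ((\<lambda>t. t * (\<beta> + \<alpha> * \<rho>) / (1 + \<rho>)) has_real_derivative (\<beta> + \<alpha> * \<rho>) / (1 + \<rho>)) (at z within {t. 0 < t \<and> 0 < \<rho>})"
      by (auto intro!: derivative_eq_intros)
    show "\<And>x y. x \<notin> {s. 0 < s \<and> 0 < y} \<Longrightarrow> h3 (x, y) = 0" by (auto simp: h3_def)
    show "\<And>\<rho> s::real. s \<in> {s. 0 < s \<and> 0 < \<rho>} \<Longrightarrow> s * (1 + \<rho>) / (\<beta> + \<alpha> * \<rho>) \<in> {t. 0 < t \<and> 0 < \<rho>} \<and> s * (1 + \<rho>) / (\<beta> + \<alpha> * \<rho>) * (\<beta> + \<alpha> * \<rho>) / (1 + \<rho>) = s"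
    proof -
      fix \<rho> s :: real assume "s \<in> {s. 0 < s \<and> 0 < \<rho>}"
      hence "0 < s" "0 < \<rho>" by auto
      moreover have "0 < \<beta> + \<alpha> * \<rho>" using a b \<open>0 < \<rho>\<close> by (simp add: add_pos_pos)
      ultimately show "s * (1 + \<rho>) / (\<beta> + \<alpha> * \<rho>) \<in> {t. 0 < t \<and> 0 < \<rho>} \<and> s * (1 + \<rho>) / (\<beta> + \<alpha> * \<rho>) * (\<beta> + \<alpha> * \<rho>) / (1 + \<rho>) = s"
        by simp
    qed
    show "\<And>\<rho> t::real. t \<in> {t. 0 < t \<and> 0 < \<rho>} \<Longrightarrow> t * (\<beta> + \<alpha> * \<rho>) / (1 + \<rho>) \<in> {s. 0 < s \<and> 0 < \<rho>} \<and> t * (\<beta> + \<alpha> * \<rho>) / (1 + \<rho>) * (1 + \<rho>) / (\<beta> + \<alpha> * \<rho>) = t"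
    proof -
      fix \<rho> t :: real assume "t \<in> {t. 0 < t \<and> 0 < \<rho>}"
      hence "0 < t" "0 < \<rho>" by auto
      moreover have "0 < \<beta> + \<alpha> * \<rho>" using a b \<open>0 < \<rho>\<close> by (simp add: add_pos_pos)
      ultimately show "t * (\<beta> + \<alpha> * \<rho>) / (1 + \<rho>) \<in> {s. 0 < s \<and> 0 < \<rho>} \<and> t * (\<beta> + \<alpha> * \<rho>) / (1 + \<rho>) * (1 + \<rho>) / (\<beta> + \<alpha> * \<rho>) = t"
        by simp
    qed
    show "\<And>z y. h4 (z, y) = (if z \<in> {t. 0 < t \<and> 0 < y} then \<bar>(\<beta> + \<alpha> * y) / (1 + y)\<bar> * h3 (z * (\<beta> + \<alpha> * y) / (1 + y), y) else 0)"
      using a b by (auto simp: h4_def add_pos_pos)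
  qed (use h3nn in auto)
  have s5: "distr (density ?L (\<lambda>z. ennreal (h4 z))) ?L T5 = density ?L (\<lambda>z. ennreal (h5 z))"
    unfolding T5_def
  proof (rule fiber2[where D="\<lambda>t. {\<rho>. 0 < \<rho> \<and> 0 < t}" and R="\<lambda>t. {v. 0 < v \<and> v < t}"
        and \<psi>="\<lambda>t v. t / v - 1" and \<psi>'="\<lambda>t v. - t / v^2"])
    show "(\<lambda>p::real\<times>real. fst p / (1 + snd p)) \<in> borel_measurable (borel \<Otimes>\<^sub>M borel)" by measurable
    show "\<And>t::real. {v::real. 0 < v \<and> v < t} \<in> sets lebesgue" by simp
    show "\<And>t z::real. z \<in> {v. 0 < v \<and> v < t} \<Longrightarrow> ((\<lambda>v. t / v - 1) has_real_derivative - t / z^2) (at z within {v. 0 < v \<and> v < t})"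
      by (auto intro!: derivative_eq_intros simp: field_simps power2_eq_square)
    show "\<And>x y. y \<notin> {\<rho>. 0 < \<rho> \<and> 0 < x} \<Longrightarrow> h4 (x, y) = 0" by (auto simp: h4_def)
    show "\<And>t \<rho>::real. \<rho> \<in> {\<rho>. 0 < \<rho> \<and> 0 < t} \<Longrightarrow> t / (1 + \<rho>) \<in> {v. 0 < v \<and> v < t} \<and> t / (t / (1 + \<rho>)) - 1 = \<rho>"
    proof -
      fix t \<rho> :: real assume "\<rho> \<in> {\<rho>. 0 < \<rho> \<and> 0 < t}"
      hence tr: "0 < \<rho>" "0 < t" by auto
      have "t / (1 + \<rho>) < t" using tr by (simp add: divide_less_eq)
      thus "t / (1 + \<rho>) \<in> {v. 0 < v \<and> v < t} \<and> t / (t / (1 + \<rho>)) - 1 = \<rho>" using tr by simp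
    qed
    show "\<And>t z::real. z \<in> {v. 0 < v \<and> v < t} \<Longrightarrow> t / z - 1 \<in> {\<rho>. 0 < \<rho> \<and> 0 < t} \<and> t / (1 + (t / z - 1)) = z"
    proof -
      fix t z :: real assume "z \<in> {v. 0 < v \<and> v < t}"
      hence tz: "0 < z" "z < t" by auto
      have "1 < t / z" using tz by (simp add: less_divide_eq)
      thus "t / z - 1 \<in> {\<rho>. 0 < \<rho> \<and> 0 < t} \<and> t / (1 + (t / z - 1)) = z" using tz by simp
    qed
    show "\<And>x z. h5 (x, z) = (if z \<in> {v. 0 < v \<and> v < x} then \<bar>- x / z^2\<bar> * h4 (x, x / z - 1) else 0)"
      by (auto simp: h5_def)
  qed (use h4nn in auto)
  have s6: "distr (density ?L (\<lambda>z. ennreal (h5 z))) ?L T6 = density ?L (\<lambda>z. ennreal (h6 z))"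
    unfolding T6_def
  proof (rule fiber1[where D="\<lambda>v. {t. 0 < v \<and> v < t}" and R="\<lambda>v. {u. 0 < v \<and> 0 < u}"
        and \<psi>="\<lambda>v u. u + v" and \<psi>'="\<lambda>v u. 1"])
    show "(\<lambda>p::real\<times>real. fst p - snd p) \<in> borel_measurable (borel \<Otimes>\<^sub>M borel)" by measurable
    show "\<And>v::real. {u::real. 0 < v \<and> 0 < u} \<in> sets lebesgue" by simp
    show "\<And>v z::real. z \<in> {u. 0 < v \<and> 0 < u} \<Longrightarrow> ((\<lambda>u. u + v) has_real_derivative 1) (at z within {u. 0 < v \<and> 0 < u})"
      by (auto intro!: derivative_eq_intros)
    show "\<And>z y. h6 (z, y) = (if z \<in> {u. 0 < y \<and> 0 < u} then \<bar>1\<bar> * h5 (z + y, y) else 0)"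
      by (auto simp: h6_def)
  qed (use h5nn in \<open>auto simp: h5_def\<close>)
  have m1: "T1 \<in> ?L \<rightarrow>\<^sub>M ?L" unfolding T1_def by measurable
  have m2: "T2 \<in> ?L \<rightarrow>\<^sub>M ?L" unfolding T2_def by measurable
  have m3: "T3 \<in> ?L \<rightarrow>\<^sub>M ?L" unfolding T3_def by measurable
  have m4: "T4 \<in> ?L \<rightarrow>\<^sub>M ?L" unfolding T4_def by measurable
  have m5: "T5 \<in> ?L \<rightarrow>\<^sub>M ?L" unfolding T5_def by measurable
  have m6: "T6 \<in> ?L \<rightarrow>\<^sub>M ?L" unfolding T6_def by measurable
  have d123: "distr (distr (distr (density ?L (\<lambda>z. ennreal (h z))) ?L T1) ?L T2) ?L T3
      = distr (density ?L (\<lambda>z. ennreal (h z))) ?L (T3 \<circ> T2 \<circ> T1)" by (rule distr3[OF m1 m2 m3])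
  have d456: "distr (distr (distr (density ?L (\<lambda>z. ennreal (h3 z))) ?L T4) ?L T5) ?L T6
      = distr (density ?L (\<lambda>z. ennreal (h3 z))) ?L (T6 \<circ> T5 \<circ> T4)" by (rule distr3[OF m4 m5 m6])
  have A: "distr (density ?L (\<lambda>z. ennreal (h z))) ?L (T3 \<circ> T2 \<circ> T1) = density ?L (\<lambda>z. ennreal (h3 z))"
    using d123 s1 s2 s3 by simp
  have B: "distr (density ?L (\<lambda>z. ennreal (h3 z))) ?L (T6 \<circ> T5 \<circ> T4) = density ?L (\<lambda>z. ennreal (h6 z))"
    using d456 s4 s5 s6 by simp
  have m123: "T3 \<circ> T2 \<circ> T1 \<in> density ?L (\<lambda>z. ennreal (h z)) \<rightarrow>\<^sub>M ?L"
    using m1 m2 m3 by (simp add: measurable_comp)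
  have m456: "T6 \<circ> T5 \<circ> T4 \<in> ?L \<rightarrow>\<^sub>M ?L" using m4 m5 m6 by (simp add: measurable_comp)
  have C: "distr (density ?L (\<lambda>z. ennreal (h z))) ?L ((T6 \<circ> T5 \<circ> T4) \<circ> (T3 \<circ> T2 \<circ> T1)) = density ?L (\<lambda>z. ennreal (h6 z))"
    using distr_distr[OF m456 m123] A B by simp
  have Hm: "(\<lambda>z. H_II \<alpha> \<beta> (fst z) (snd z)) \<in> density ?L (\<lambda>z. ennreal (h z)) \<rightarrow>\<^sub>M ?L"
    unfolding H_II_def by simp
  have D: "distr (density ?L (\<lambda>z. ennreal (h z))) ?L (\<lambda>z. H_II \<alpha> \<beta> (fst z) (snd z))
      = distr (density ?L (\<lambda>z. ennreal (h z))) ?L ((T6 \<circ> T5 \<circ> T4) \<circ> (T3 \<circ> T2 \<circ> T1))"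
  proof (rule distr_cong_AE)
    show "AE z in density ?L (\<lambda>z. ennreal (h z)). H_II \<alpha> \<beta> (fst z) (snd z) = ((T6 \<circ> T5 \<circ> T4) \<circ> (T3 \<circ> T2 \<circ> T1)) z"
    proof (subst AE_density, measurable, intro AE_I2 impI)
      fix z :: "real \<times> real"
      assume "0 < ennreal (h z)"
      hence "h z \<noteq> 0" by auto
      obtain x y where z: "z = (x, y)" by (cases z)
      have xy: "0 < x" "0 < y" using supp \<open>h z \<noteq> 0\<close> z by auto
      show "H_II \<alpha> \<beta> (fst z) (snd z) = ((T6 \<circ> T5 \<circ> T4) \<circ> (T3 \<circ> T2 \<circ> T1)) z"
        using mapA[OF a b xy] unfolding z T1_def T2_def T3_def T4_def T5_def T6_def by (simp add: add_ac)
    qed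
    show "(T6 \<circ> T5 \<circ> T4) \<circ> (T3 \<circ> T2 \<circ> T1) \<in> density ?L (\<lambda>z. ennreal (h z)) \<rightarrow>\<^sub>M ?L"
      using m456 m123 by (rule measurable_comp[rotated])
  qed (use Hm in auto)
  have E: "density ?L (\<lambda>z. ennreal (h6 z)) = density ?L (\<lambda>z. ennreal (if 0 < fst z \<and> 0 < snd z then
          (\<alpha> + \<alpha> * fst z + \<beta> * snd z) * (\<beta> + \<alpha> * fst z + \<beta> * snd z) / (1 + fst z + snd z)^2
          * h (snd z * (\<beta> + \<alpha> * fst z + \<beta> * snd z) / (1 + fst z + snd z),
               fst z * (\<alpha> + \<alpha> * fst z + \<beta> * snd z) / (1 + fst z + snd z)) else 0))"
  proof (rule arg_cong[where f="density ?L"], rule ext)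
    fix z :: "real \<times> real"
    obtain u v where z: "z = (u, v)" by (cases z)
    show "ennreal (h6 z) = ennreal (if 0 < fst z \<and> 0 < snd z then
          (\<alpha> + \<alpha> * fst z + \<beta> * snd z) * (\<beta> + \<alpha> * fst z + \<beta> * snd z) / (1 + fst z + snd z)^2
          * h (snd z * (\<beta> + \<alpha> * fst z + \<beta> * snd z) / (1 + fst z + snd z),
               fst z * (\<alpha> + \<alpha> * fst z + \<beta> * snd z) / (1 + fst z + snd z)) else 0)"
    proof (cases "0 < u \<and> 0 < v")
      case False thus ?thesis unfolding z h6_def by auto
    next
      case True
      hence u: "0 < u" and v: "0 < v" by auto
      define \<rho> where "\<rho> = (u + v) / v - 1"
      define s where "s = (u + v) * (\<beta> + \<alpha> * \<rho>) / (1 + \<rho>)"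
      define r where "r = \<rho> * (\<alpha> + s) / (\<beta> + s)"
      note A = algA[OF a b u v, folded \<rho>_def, folded s_def, folded r_def]
      have e6: "h6 (u, v) = h5 (u + v, v)" using u v by (simp add: h6_def)
      have e5: "h5 (u + v, v) = (u + v) / v^2 * h4 (u + v, \<rho>)" using u v by (simp add: h5_def \<rho>_def)
      have e4: "h4 (u + v, \<rho>) = (\<beta> + \<alpha> * \<rho>) / (1 + \<rho>) * h3 (s, \<rho>)"
        using u v A(1) by (simp add: h4_def s_def)
      have e3: "h3 (s, \<rho>) = (\<alpha> + s) / (\<beta> + s) * h2 (s, r)"
        using A(1,3) by (simp add: h3_def r_def)
      have e2: "h2 (s, r) = s / (1 + r)^2 * h1 (s, s * r / (1 + r))"
        using A(3,4) by (simp add: h2_def)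
      have e1: "h1 (s, s * r / (1 + r)) = h (s - s * r / (1 + r), s * r / (1 + r))"
        using A(5,6) by (simp add: h1_def)
      have "h6 z = (u + v) / v^2 * ((\<beta> + \<alpha> * \<rho>) / (1 + \<rho>)) * ((\<alpha> + s) / (\<beta> + s)) * (s / (1 + r)^2)
           * h (s - s * r / (1 + r), s * r / (1 + r))"
        unfolding z e6 e5 e4 e3 e2 e1 by (simp add: mult.assoc)
      also have "\<dots> = (\<alpha> + \<alpha> * u + \<beta> * v) * (\<beta> + \<alpha> * u + \<beta> * v) / (1 + u + v)^2
          * h (v * (\<beta> + \<alpha> * u + \<beta> * v) / (1 + u + v), u * (\<alpha> + \<alpha> * u + \<beta> * v) / (1 + u + v))"
        by (subst A(7), subst A(8), subst A(9)) (rule refl)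
      finally show ?thesis unfolding z using u v by simp
    qed
  qed
  show ?thesis using C D E by simp
qed

lemma K_exp: "0 < x \<Longrightarrow> 0 < q \<Longrightarrow> K_dens lam a b p q x = exp ((lam - 1) * ln x + - a * p * x + (- b + lam / 2) * ln (1 + q / x))"
proof -
  assume x: "0 < x" and q: "0 < q"
  have p: "0 < 1 + q / x" using x q by (simp add: add_pos_pos)
  have e1: "x powr (lam - 1) = exp ((lam - 1) * ln x)" using x by (simp add: powr_def)
  have e2: "(1 + q / x) powr (- b + lam / 2) = exp ((- b + lam / 2) * ln (1 + q / x))" using p by (simp add: powr_def)
  show ?thesis unfolding K_dens_def if_P[OF x] e1 e2 by (simp only: mult_exp_exp)
qed

lemma K_exp1: "0 < x \<Longrightarrow> K_dens lam a b p 1 x = exp ((lam - 1) * ln x + - a * p * x + (- b + lam / 2) * (ln (1 + x) - ln x))"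
proof -
  assume x: "0 < x"
  have "ln (1 + 1 / x) = ln (1 + x) - ln x"
  proof -
    have "1 + 1 / x = (1 + x) / x" using x by (simp add: field_simps)
    thus ?thesis using x by (simp add: ln_div)
  qed
  thus ?thesis using K_exp[OF x, of 1] by simp
qed

lemma expoA:
  fixes xa ya al be u v lA lB lN lu lv l1u l1v lam a b :: real
  assumes h: "xa + ya = al * u + be * v"
  shows "lA + lB - (lN + lN) + ((lam - 1) * (lv + lB - lN) + - a * 1 * xa + (- b + lam / 2) * (l1v + lA - lv - lB))
     + ((- lam - 1) * (lu + lA - lN) + - a * 1 * ya + (- b + - lam / 2) * (l1u + lB - lu - lA))
   = (- lam - 1) * lu + - a * al * u + (- b + - lam / 2) * (l1u - lu) + ((lam - 1) * lv + - a * be * v + (- b + lam / 2) * (l1v - lv))"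
proof -
  have xa: "xa = al * u + be * v - ya" using h by simp
  show ?thesis unfolding xa apply (simp add: algebra_simps) apply (simp add: field_simps) done
qed

lemma identA:
  fixes \<alpha> \<beta> u v lam a b :: real
  assumes al: "0 < \<alpha>" and be: "0 < \<beta>" and u: "0 < u" and v: "0 < v"
  shows "(\<alpha> + \<alpha> * u + \<beta> * v) * (\<beta> + \<alpha> * u + \<beta> * v) / (1 + u + v)^2
     * (K_dens lam a b 1 \<alpha> (v * (\<beta> + \<alpha> * u + \<beta> * v) / (1 + u + v))
        * K_dens (- lam) a b 1 \<beta> (u * (\<alpha> + \<alpha> * u + \<beta> * v) / (1 + u + v)))
     = K_dens (- lam) a b \<alpha> 1 u * K_dens lam a b \<beta> 1 v"
proof -
  define A where "A = \<alpha> + \<alpha> * u + \<beta> * v"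
  define B where "B = \<beta> + \<alpha> * u + \<beta> * v"
  define N where "N = 1 + u + v"
  have Ap: "0 < A" and Bp: "0 < B" and Np: "0 < N" unfolding A_def B_def N_def using al be u v by (simp_all add: add_pos_pos)
  define X where "X = v * B / N"
  define Y where "Y = u * A / N"
  have Xp: "0 < X" and Yp: "0 < Y" unfolding X_def Y_def using Ap Bp Np u v by simp_all
  have lnX: "ln X = ln v + ln B - ln N" unfolding X_def using v Bp Np by (simp add: ln_div ln_mult)
  have lnY: "ln Y = ln u + ln A - ln N" unfolding Y_def using u Ap Np by (simp add: ln_div ln_mult)
  have e1: "1 + \<alpha> / X = (1 + v) * A / (v * B)"
  proof -
    have "1 + \<alpha> / X = (v * B + \<alpha> * N) / (v * B)" unfolding X_def using v Bp Np by (simp add: field_simps)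
    also have "v * B + \<alpha> * N = (1 + v) * A" unfolding A_def B_def N_def by (simp add: algebra_simps)
    finally show ?thesis .
  qed
  have e2: "1 + \<beta> / Y = (1 + u) * B / (u * A)"
  proof -
    have "1 + \<beta> / Y = (u * A + \<beta> * N) / (u * A)" unfolding Y_def using u Ap Np by (simp add: field_simps)
    also have "u * A + \<beta> * N = (1 + u) * B" unfolding A_def B_def N_def by (simp add: algebra_simps)
    finally show ?thesis .
  qed
  have l1: "ln (1 + \<alpha> / X) = ln (1 + v) + ln A - ln v - ln B" unfolding e1 using v Ap Bp by (simp add: ln_div ln_mult)
  have l2: "ln (1 + \<beta> / Y) = ln (1 + u) + ln B - ln u - ln A" unfolding e2 using u Ap Bp by (simp add: ln_div ln_mult)
  have XY: "X + Y = \<alpha> * u + \<beta> * v"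
  proof -
    have "X + Y = (v * B + u * A) / N" unfolding X_def Y_def by (simp add: add_divide_distrib)
    also have "v * B + u * A = (\<alpha> * u + \<beta> * v) * N" unfolding A_def B_def N_def by (simp add: algebra_simps)
    finally show ?thesis using Np by simp
  qed
  have J0: "exp (ln A + ln B - (ln N + ln N)) = A * B / (N * N)"
    using Ap Bp Np by (simp only: exp_diff exp_add exp_ln)
  have J: "A * B / N^2 = exp (ln A + ln B - (ln N + ln N))"
    unfolding J0 by (simp add: power2_eq_square)
  have "A * B / N^2 * (K_dens lam a b 1 \<alpha> X * K_dens (- lam) a b 1 \<beta> Y)
      = exp ((ln A + ln B - (ln N + ln N)) + ((lam - 1) * ln X + - a * 1 * X + (- b + lam / 2) * ln (1 + \<alpha> / X))
           + ((- lam - 1) * ln Y + - a * 1 * Y + (- b + - lam / 2) * ln (1 + \<beta> / Y)))"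
    unfolding J K_exp[OF Xp al] K_exp[OF Yp be] by (simp only: mult_exp_exp add.assoc)
  also have "\<dots> = exp (((- lam - 1) * ln u + - a * \<alpha> * u + (- b + - lam / 2) * (ln (1 + u) - ln u))
           + ((lam - 1) * ln v + - a * \<beta> * v + (- b + lam / 2) * (ln (1 + v) - ln v)))"
  proof -
    have "- a * 1 * X - a * 1 * Y = - a * (X + Y)" by (simp add: algebra_simps)
    also have "\<dots> = - a * (\<alpha> * u + \<beta> * v)" by (simp only: XY)
    also have "\<dots> = - a * \<alpha> * u - a * \<beta> * v" by (simp add: algebra_simps)
    show ?thesis unfolding lnX lnY l1 l2 by (intro arg_cong[where f=exp] expoA XY)
  qed
  also have "\<dots> = K_dens (- lam) a b \<alpha> 1 u * K_dens lam a b \<beta> 1 v"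
    unfolding K_exp1[OF u] K_exp1[OF v] by (simp only: mult_exp_exp add.assoc)
  finally show ?thesis unfolding A_def B_def N_def X_def Y_def .
qed


lemma K2_exp: "0 < x \<Longrightarrow> K2_dens A B C x = exp ((A - 1) * ln x + (- A - B) * ln (1 + x) + - C * x)"
proof -
  assume x: "0 < x"
  have p: "0 < 1 + x" using x by simp
  have e1: "x powr (A - 1) = exp ((A - 1) * ln x)" using x by (simp add: powr_def)
  have e2: "(1 + x) powr (- A - B) = exp ((- A - B) * ln (1 + x))" using p by (simp add: powr_def)
  show ?thesis unfolding K2_dens_def if_P[OF x] e1 e2 by (simp only: mult_exp_exp add.assoc)
qed

lemma Ga_exp: "0 < x \<Longrightarrow> Ga_dens A C x = exp ((A - 1) * ln x + - C * x)"
proof -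
  assume x: "0 < x"
  have e1: "x powr (A - 1) = exp ((A - 1) * ln x)" using x by (simp add: powr_def)
  show ?thesis unfolding Ga_dens_def if_P[OF x] e1 by (simp only: mult_exp_exp add.assoc)
qed

lemma Be_exp: "0 < x \<Longrightarrow> Beta'_dens A B x = exp ((A - 1) * ln x + (- A - B) * ln (1 + x))"
proof -
  assume x: "0 < x"
  have p: "0 < 1 + x" using x by simp
  have e1: "x powr (A - 1) = exp ((A - 1) * ln x)" using x by (simp add: powr_def)
  have e2: "(1 + x) powr (- A - B) = exp ((- A - B) * ln (1 + x))" using p by (simp add: powr_def)
  show ?thesis unfolding Beta'_dens_def if_P[OF x] e1 e2 by (simp only: mult_exp_exp add.assoc)
qed

lemma expoB:
  fixes xa ya u lu lv lN l1u l1v lam a b :: real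
  assumes h: "xa + ya = u"
  shows "lu + l1u - (lN + lN) + ((b + lam / 2 - 1) * (lu + lv - lN) + (- (b + lam / 2) - - lam) * (l1u + l1v - lN) + - a * xa
       + ((- lam - 1) * (lu + l1u - lN) + - a * ya))
   = (b - lam / 2 - 1) * lu + (- (b - lam / 2) - lam) * l1u + - a * u + ((b + lam / 2 - 1) * lv + (- (b + lam / 2) - - lam) * l1v)"
proof -
  have xa: "xa = u - ya" using h by simp
  show ?thesis unfolding xa apply (simp add: algebra_simps) apply (simp add: field_simps) done
qed

lemma identB:
  fixes u v lam a b :: real
  assumes u: "0 < u" and v: "0 < v"
  shows "u * (1 + u) / (1 + u + v)^2
     * (K2_dens (b + lam / 2) (- lam) a (u * v / (1 + u + v))
        * Ga_dens (- lam) a (u - u * v / (1 + u + v)))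
     = K2_dens (b - lam / 2) lam a u * Beta'_dens (b + lam / 2) (- lam) v"
proof -
  define N where "N = 1 + u + v"
  have Np: "0 < N" unfolding N_def using u v by simp
  define X where "X = u * v / N"
  define Y where "Y = u - u * v / N"
  have Ye: "Y = u * (1 + u) / N" unfolding Y_def N_def using Np[unfolded N_def] by (simp add: field_simps)
  have Xp: "0 < X" unfolding X_def using u v Np by simp
  have Yp: "0 < Y" unfolding Ye using u Np by simp
  have lnX: "ln X = ln u + ln v - ln N" unfolding X_def using u v Np by (simp add: ln_div ln_mult)
  have lnY: "ln Y = ln u + ln (1 + u) - ln N" unfolding Ye using u Np by (simp add: ln_div ln_mult)
  have e1: "1 + X = (1 + u) * (1 + v) / N"
  proof -
    have "1 + X = (N + u * v) / N" unfolding X_def using Np by (simp add: add_divide_distrib)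
    also have "N + u * v = (1 + u) * (1 + v)" unfolding N_def by (simp add: algebra_simps)
    finally show ?thesis .
  qed
  have l1: "ln (1 + X) = ln (1 + u) + ln (1 + v) - ln N" unfolding e1 using u v Np by (simp add: ln_div ln_mult)
  have XY: "X + Y = u" unfolding X_def Y_def by simp
  have J0: "exp (ln u + ln (1 + u) - (ln N + ln N)) = u * (1 + u) / (N * N)"
  proof -
    have p: "0 < 1 + u" using u by simp
    show ?thesis using u p Np by (simp only: exp_diff exp_add exp_ln)
  qed
  have J: "u * (1 + u) / N^2 = exp (ln u + ln (1 + u) - (ln N + ln N))"
    unfolding J0 by (simp add: power2_eq_square)
  have "u * (1 + u) / N^2 * (K2_dens (b + lam / 2) (- lam) a X * Ga_dens (- lam) a Y)
      = exp (ln u + ln (1 + u) - (ln N + ln N) + ((b + lam / 2 - 1) * ln X + (- (b + lam / 2) - - lam) * ln (1 + X) + - a * X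
         + ((- lam - 1) * ln Y + - a * Y)))"
    unfolding J K2_exp[OF Xp] Ga_exp[OF Yp] by (simp only: mult_exp_exp add.assoc)
  also have "\<dots> = exp ((b - lam / 2 - 1) * ln u + (- (b - lam / 2) - lam) * ln (1 + u) + - a * u
       + ((b + lam / 2 - 1) * ln v + (- (b + lam / 2) - - lam) * ln (1 + v)))"
    unfolding lnX lnY l1 by (intro arg_cong[where f=exp] expoB XY)
  also have "\<dots> = K2_dens (b - lam / 2) lam a u * Beta'_dens (b + lam / 2) (- lam) v"
    unfolding K2_exp[OF u] Be_exp[OF v] by (simp only: mult_exp_exp add.assoc)
  finally show ?thesis unfolding N_def X_def Y_def .
qed

lemma K_nn: "0 \<le> K_dens lam a b p q x"
  unfolding K_dens_def by simp

lemma K2_nn: "0 \<le> K2_dens A B C x"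
  unfolding K2_dens_def by simp

lemma Ga_nn: "0 \<le> Ga_dens A C x"
  unfolding Ga_dens_def by simp

lemma Be_nn: "0 \<le> Beta'_dens A B x"
  unfolding Beta'_dens_def by simp

lemma K_m[measurable]: "(\<lambda>x. K_dens lam a b p q (f x)) \<in> borel_measurable M" if [measurable]: "f \<in> borel_measurable M"
  unfolding K_dens_def by measurable

lemma K2_m[measurable]: "(\<lambda>x. K2_dens A B C (f x)) \<in> borel_measurable M" if [measurable]: "f \<in> borel_measurable M"
  unfolding K2_dens_def by measurable

lemma Ga_m[measurable]: "(\<lambda>x. Ga_dens A C (f x)) \<in> borel_measurable M" if [measurable]: "f \<in> borel_measurable M"
  unfolding Ga_dens_def by measurable

lemma Be_m[measurable]: "(\<lambda>x. Beta'_dens A B (f x)) \<in> borel_measurable M" if [measurable]: "f \<in> borel_measurable M"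
  unfolding Beta'_dens_def by measurable

lemma partA:
  fixes M :: "'a measure" and X Y :: "'a \<Rightarrow> real"
  assumes M: "prob_space M" and al: "0 < \<alpha>" and be: "0 < \<beta>"
    and hX: "has_density_prop M X (K_dens lam a b 1 \<alpha>)"
    and hY: "has_density_prop M Y (K_dens (- lam) a b 1 \<beta>)"
    and ind: "prob_space.indep_var M borel X borel Y"
  shows "prob_space.indep_var M borel (\<lambda>\<omega>. fst (H_II \<alpha> \<beta> (X \<omega>) (Y \<omega>))) borel (\<lambda>\<omega>. snd (H_II \<alpha> \<beta> (X \<omega>) (Y \<omega>)))
     \<and> has_density_prop M (\<lambda>\<omega>. fst (H_II \<alpha> \<beta> (X \<omega>) (Y \<omega>))) (K_dens (- lam) a b \<alpha> 1)
     \<and> has_density_prop M (\<lambda>\<omega>. snd (H_II \<alpha> \<beta> (X \<omega>) (Y \<omega>))) (K_dens lam a b \<beta> 1)"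
proof -
  obtain c1 where c1: "0 < c1" and dX: "distributed M lborel X (\<lambda>x. ennreal (c1 * K_dens lam a b 1 \<alpha> x))"
    using hX unfolding has_density_prop_def by blast
  obtain c2 where c2: "0 < c2" and dY: "distributed M lborel Y (\<lambda>x. ennreal (c2 * K_dens (- lam) a b 1 \<beta> x))"
    using hY unfolding has_density_prop_def by blast
  let ?L = "lborel \<Otimes>\<^sub>M lborel :: (real \<times> real) measure"
  define h where "h = (\<lambda>z::real\<times>real. c1 * K_dens lam a b 1 \<alpha> (fst z) * (c2 * K_dens (- lam) a b 1 \<beta> (snd z)))"
  have hm: "h \<in> borel_measurable (borel \<Otimes>\<^sub>M borel)" unfolding h_def by measurable
  have hnn: "\<And>p. 0 \<le> h p" unfolding h_def using c1 c2 by (simp add: K_nn)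
  have supp: "\<And>x y. \<not> (0 < x \<and> 0 < y) \<Longrightarrow> h (x,y) = 0" unfolding h_def K_dens_def by auto
  have eqF: "(\<lambda>z. ennreal (c1 * K_dens lam a b 1 \<alpha> (fst z)) * ennreal (c2 * K_dens (- lam) a b 1 \<beta> (snd z)))
     = (\<lambda>z. ennreal (h z))"
    unfolding h_def using c1 c2 by (auto simp: fun_eq_iff ennreal_mult K_nn)
  have E: "density ?L (\<lambda>z. ennreal (if 0 < fst z \<and> 0 < snd z then
          (\<alpha> + \<alpha> * fst z + \<beta> * snd z) * (\<beta> + \<alpha> * fst z + \<beta> * snd z) / (1 + fst z + snd z)^2
          * h (snd z * (\<beta> + \<alpha> * fst z + \<beta> * snd z) / (1 + fst z + snd z),
               fst z * (\<alpha> + \<alpha> * fst z + \<beta> * snd z) / (1 + fst z + snd z)) else 0))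
     = density ?L (\<lambda>z. ennreal (c1 * c2 * K_dens (- lam) a b \<alpha> 1 (fst z)) * ennreal (K_dens lam a b \<beta> 1 (snd z)))"
  proof (rule arg_cong[where f="density ?L"], rule ext)
    fix z :: "real \<times> real"
    obtain u v where z: "z = (u, v)" by (cases z)
    show "ennreal (if 0 < fst z \<and> 0 < snd z then
          (\<alpha> + \<alpha> * fst z + \<beta> * snd z) * (\<beta> + \<alpha> * fst z + \<beta> * snd z) / (1 + fst z + snd z)^2
          * h (snd z * (\<beta> + \<alpha> * fst z + \<beta> * snd z) / (1 + fst z + snd z),
               fst z * (\<alpha> + \<alpha> * fst z + \<beta> * snd z) / (1 + fst z + snd z)) else 0)
       = ennreal (c1 * c2 * K_dens (- lam) a b \<alpha> 1 (fst z)) * ennreal (K_dens lam a b \<beta> 1 (snd z))"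
    proof (cases "0 < u \<and> 0 < v")
      case True
      hence u: "0 < u" and v: "0 < v" by auto
      have "(\<alpha> + \<alpha> * u + \<beta> * v) * (\<beta> + \<alpha> * u + \<beta> * v) / (1 + u + v)^2
          * h (v * (\<beta> + \<alpha> * u + \<beta> * v) / (1 + u + v), u * (\<alpha> + \<alpha> * u + \<beta> * v) / (1 + u + v))
        = c1 * c2 * ((\<alpha> + \<alpha> * u + \<beta> * v) * (\<beta> + \<alpha> * u + \<beta> * v) / (1 + u + v)^2
     * (K_dens lam a b 1 \<alpha> (v * (\<beta> + \<alpha> * u + \<beta> * v) / (1 + u + v))
        * K_dens (- lam) a b 1 \<beta> (u * (\<alpha> + \<alpha> * u + \<beta> * v) / (1 + u + v))))"
        unfolding h_def by (simp add: mult_ac)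
      also have "\<dots> = c1 * c2 * K_dens (- lam) a b \<alpha> 1 u * K_dens lam a b \<beta> 1 v"
        unfolding identA[OF al be u v] by (simp add: mult_ac)
      finally show ?thesis unfolding z using u v c1 c2
        by (simp add: ennreal_mult[symmetric] K_nn)
    next
      case False
      hence "K_dens (- lam) a b \<alpha> 1 u = 0 \<or> K_dens lam a b \<beta> 1 v = 0" unfolding K_dens_def by auto
      thus ?thesis unfolding z using False by auto
    qed
  qed
  have tr: "distr (density ?L (\<lambda>z. ennreal (c1 * K_dens lam a b 1 \<alpha> (fst z)) * ennreal (c2 * K_dens (- lam) a b 1 \<beta> (snd z))))
      ?L (\<lambda>z. H_II \<alpha> \<beta> (fst z) (snd z))
    = density ?L (\<lambda>z. ennreal (c1 * c2 * K_dens (- lam) a b \<alpha> 1 (fst z)) * ennreal (K_dens lam a b \<beta> 1 (snd z)))"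
    unfolding eqF by (rule trans[OF chainA[OF al be hm hnn supp] E])
  have Tm: "(\<lambda>z. H_II \<alpha> \<beta> (fst z) (snd z)) \<in> (borel \<Otimes>\<^sub>M borel) \<rightarrow>\<^sub>M (borel \<Otimes>\<^sub>M borel)"
    unfolding H_II_def by measurable
  have "0 < c1 * c2" using c1 c2 by simp
  from wrapper[OF M dX dY ind Tm tr this] show ?thesis by (simp add: K_nn)
qed

lemma partB:
  fixes M :: "'a measure" and X Y :: "'a \<Rightarrow> real"
  assumes M: "prob_space M"
    and hX: "has_density_prop M X (K2_dens (b + lam / 2) (- lam) a)"
    and hY: "has_density_prop M Y (Ga_dens (- lam) a)"
    and ind: "prob_space.indep_var M borel X borel Y"
  shows "prob_space.indep_var M borel (\<lambda>\<omega>. fst (F_KGa_A (X \<omega>) (Y \<omega>))) borel (\<lambda>\<omega>. snd (F_KGa_A (X \<omega>) (Y \<omega>)))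
     \<and> has_density_prop M (\<lambda>\<omega>. fst (F_KGa_A (X \<omega>) (Y \<omega>))) (K2_dens (b - lam / 2) lam a)
     \<and> has_density_prop M (\<lambda>\<omega>. snd (F_KGa_A (X \<omega>) (Y \<omega>))) (Beta'_dens (b + lam / 2) (- lam))"
proof -
  obtain c1 where c1: "0 < c1" and dX: "distributed M lborel X (\<lambda>x. ennreal (c1 * K2_dens (b + lam / 2) (- lam) a x))"
    using hX unfolding has_density_prop_def by blast
  obtain c2 where c2: "0 < c2" and dY: "distributed M lborel Y (\<lambda>x. ennreal (c2 * Ga_dens (- lam) a x))"
    using hY unfolding has_density_prop_def by blast
  let ?L = "lborel \<Otimes>\<^sub>M lborel :: (real \<times> real) measure"
  define h where "h = (\<lambda>z::real\<times>real. c1 * K2_dens (b + lam / 2) (- lam) a (fst z) * (c2 * Ga_dens (- lam) a (snd z)))"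
  have hm: "h \<in> borel_measurable (borel \<Otimes>\<^sub>M borel)" unfolding h_def by measurable
  have hnn: "\<And>p. 0 \<le> h p" unfolding h_def using c1 c2 by (simp add: K2_nn Ga_nn)
  have supp: "\<And>x y. \<not> (0 < x \<and> 0 < y) \<Longrightarrow> h (x,y) = 0" unfolding h_def K2_dens_def Ga_dens_def by auto
  have eqF: "(\<lambda>z. ennreal (c1 * K2_dens (b + lam / 2) (- lam) a (fst z)) * ennreal (c2 * Ga_dens (- lam) a (snd z)))
     = (\<lambda>z. ennreal (h z))"
    unfolding h_def using c1 c2 by (auto simp: fun_eq_iff ennreal_mult K2_nn Ga_nn)
  have E: "density ?L (\<lambda>z. ennreal (if 0 < fst z \<and> 0 < snd z then
          fst z * (1 + fst z) / (1 + fst z + snd z)^2 * h (fst z * snd z / (1 + fst z + snd z), fst z - fst z * snd z / (1 + fst z + snd z)) else 0))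
     = density ?L (\<lambda>z. ennreal (c1 * c2 * K2_dens (b - lam / 2) lam a (fst z)) * ennreal (Beta'_dens (b + lam / 2) (- lam) (snd z)))"
  proof (rule arg_cong[where f="density ?L"], rule ext)
    fix z :: "real \<times> real"
    obtain u v where z: "z = (u, v)" by (cases z)
    show "ennreal (if 0 < fst z \<and> 0 < snd z then
          fst z * (1 + fst z) / (1 + fst z + snd z)^2 * h (fst z * snd z / (1 + fst z + snd z), fst z - fst z * snd z / (1 + fst z + snd z)) else 0)
       = ennreal (c1 * c2 * K2_dens (b - lam / 2) lam a (fst z)) * ennreal (Beta'_dens (b + lam / 2) (- lam) (snd z))"
    proof (cases "0 < u \<and> 0 < v")
      case True
      hence u: "0 < u" and v: "0 < v" by auto
      have "u * (1 + u) / (1 + u + v)^2 * h (u * v / (1 + u + v), u - u * v / (1 + u + v))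
        = c1 * c2 * (u * (1 + u) / (1 + u + v)^2
     * (K2_dens (b + lam / 2) (- lam) a (u * v / (1 + u + v))
        * Ga_dens (- lam) a (u - u * v / (1 + u + v))))"
        unfolding h_def by (simp add: mult_ac)
      also have "\<dots> = c1 * c2 * K2_dens (b - lam / 2) lam a u * Beta'_dens (b + lam / 2) (- lam) v"
        unfolding identB[OF u v] by (simp add: mult_ac)
      finally show ?thesis unfolding z using u v c1 c2
        by (simp add: ennreal_mult[symmetric] K2_nn Be_nn)
    next
      case False
      hence "K2_dens (b - lam / 2) lam a u = 0 \<or> Beta'_dens (b + lam / 2) (- lam) v = 0"
        unfolding K2_dens_def Beta'_dens_def by auto
      thus ?thesis unfolding z using False by auto
    qed
  qed
  have tr: "distr (density ?L (\<lambda>z. ennreal (c1 * K2_dens (b + lam / 2) (- lam) a (fst z)) * ennreal (c2 * Ga_dens (- lam) a (snd z))))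
      ?L (\<lambda>z. F_KGa_A (fst z) (snd z))
    = density ?L (\<lambda>z. ennreal (c1 * c2 * K2_dens (b - lam / 2) lam a (fst z)) * ennreal (Beta'_dens (b + lam / 2) (- lam) (snd z)))"
    unfolding eqF by (rule trans[OF chainB[OF hm hnn supp] E])
  have Tm: "(\<lambda>z. F_KGa_A (fst z) (snd z)) \<in> (borel \<Otimes>\<^sub>M borel) \<rightarrow>\<^sub>M (borel \<Otimes>\<^sub>M borel)"
    unfolding F_KGa_A_def by measurable
  have "0 < c1 * c2" using c1 c2 by simp
  from wrapper[OF M dX dY ind Tm tr this] show ?thesis by (simp add: K2_nn Be_nn)
qed

theorem corollary5p2:
  fixes M :: "'a measure"
  assumes "prob_space M"
  shows
   "(\<forall>(\<alpha>::real) (\<beta>::real) (lam::real) (a::real) (b::real) (X::'a \<Rightarrow> real) (Y::'a \<Rightarrow> real).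
       0 < \<alpha> \<and> 0 < \<beta> \<and> 0 < a \<and> 0 < b \<and> - b < lam / 2 \<and> lam / 2 < b \<and>
       has_density_prop M X (K_dens lam a b 1 \<alpha>) \<and>
       has_density_prop M Y (K_dens (- lam) a b 1 \<beta>) \<and>
       prob_space.indep_var M borel X borel Y
       \<longrightarrow>
       (let U = (\<lambda>\<omega>. fst (H_II \<alpha> \<beta> (X \<omega>) (Y \<omega>)));
            V = (\<lambda>\<omega>. snd (H_II \<alpha> \<beta> (X \<omega>) (Y \<omega>)))
        in prob_space.indep_var M borel U borel V \<and>
           has_density_prop M U (K_dens (- lam) a b \<alpha> 1) \<and>
           has_density_prop M V (K_dens lam a b \<beta> 1)))
    \<and>
    (\<forall>(lam::real) (a::real) (b::real) (X::'a \<Rightarrow> real) (Y::'a \<Rightarrow> real).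
       lam < 0 \<and> 0 < a \<and> 0 < b \<and> - b < lam / 2 \<and>
       has_density_prop M X (K2_dens (b + lam / 2) (- lam) a) \<and>
       has_density_prop M Y (Ga_dens (- lam) a) \<and>
       prob_space.indep_var M borel X borel Y
       \<longrightarrow>
       (let U = (\<lambda>\<omega>. fst (F_KGa_A (X \<omega>) (Y \<omega>)));
            V = (\<lambda>\<omega>. snd (F_KGa_A (X \<omega>) (Y \<omega>)))
        in prob_space.indep_var M borel U borel V \<and>
           has_density_prop M U (K2_dens (b - lam / 2) lam a) \<and>
           has_density_prop M V (Beta'_dens (b + lam / 2) (- lam))))"
proof (intro conjI allI impI)
  fix \<alpha> \<beta> lam a b :: real and X Y :: "'a \<Rightarrow> real"
  assume H: "0 < \<alpha> \<and> 0 < \<beta> \<and> 0 < a \<and> 0 < b \<and> - b < lam / 2 \<and> lam / 2 < b \<and>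
       has_density_prop M X (K_dens lam a b 1 \<alpha>) \<and>
       has_density_prop M Y (K_dens (- lam) a b 1 \<beta>) \<and>
       prob_space.indep_var M borel X borel Y"
  show "let U = (\<lambda>\<omega>. fst (H_II \<alpha> \<beta> (X \<omega>) (Y \<omega>)));
            V = (\<lambda>\<omega>. snd (H_II \<alpha> \<beta> (X \<omega>) (Y \<omega>)))
        in prob_space.indep_var M borel U borel V \<and>
           has_density_prop M U (K_dens (- lam) a b \<alpha> 1) \<and>
           has_density_prop M V (K_dens lam a b \<beta> 1)"
    unfolding Let_def using partA[OF assms] H by blast
next
  fix lam a b :: real and X Y :: "'a \<Rightarrow> real"
  assume H: "lam < 0 \<and> 0 < a \<and> 0 < b \<and> - b < lam / 2 \<and>
       has_density_prop M X (K2_dens (b + lam / 2) (- lam) a) \<and>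
       has_density_prop M Y (Ga_dens (- lam) a) \<and>
       prob_space.indep_var M borel X borel Y"
  show "let U = (\<lambda>\<omega>. fst (F_KGa_A (X \<omega>) (Y \<omega>)));
            V = (\<lambda>\<omega>. snd (F_KGa_A (X \<omega>) (Y \<omega>)))
        in prob_space.indep_var M borel U borel V \<and>
           has_density_prop M U (K2_dens (b - lam / 2) lam a) \<and>
           has_density_prop M V (Beta'_dens (b + lam / 2) (- lam))"
    unfolding Let_def using partB[OF assms] H by blast
qed

end
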